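(* For $n\geq 0$ let $m_n$ and $i_n$ denote the numbers of isomorphism classes of matroids and of irreducible matroids, respectively, on an $n$-element set, and for $r,k\geq 0$ let $m_{r,k}$ and $i_{r,k}$ denote the numbers of isomorphism classes of matroids and of irreducible matroids of rank $r$ and nullity $k$. Let $M(t)=\sum_{n\geq 0}m_nt^n$, $I(t)=\sum_{n\geq0}i_nt^n$, $M(x,y)=\sum_{r,k\geq 0}m_{r,k}x^ry^k$, $I(x,y)=\sum_{r,k\geq0}i_{r,k}x^ry^k$ as formal power series. Then $$M(t)=\frac{1}{1-I(t)}\qquad\text{and}\qquad M(x,y)=\frac{1}{1-I(x,y)}.$$
   Context: For a matroid $M$ on $S$ write $\rho_M$ for rank, $\rho(M)=\rho_M(S)$, $\nu_M(A)=|A|-\rho_M(A)$, $\lambda_M(A)=\rho(M)-\rho_M(A)$. For matroids $M$ on $S$ and $N$ on $T$ with $S\cap T=\emptyset$, the free product $M\mathbin{\Box} N$ is the matroid on $S\cup T$ whose independent sets are those $A$ with $A\cap S$ independent in $M$ and $\lambda_M(A\cap S)\geq\nu_N(A\cap T)$; it is associative. A matroid is irreducible if it is nonempty and every factorization of it as a free product contains it as a factor; the empty matroid is not irreducible (it is counted in $m_0=1$, $m_{0,0}=1$). *)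

theory Defs
  imports "HOL-Computational_Algebra.Formal_Power_Series"
begin

definition matroid :: "'a set \<Rightarrow> 'a set set \<Rightarrow> bool" where
  "matroid E \<I> \<longleftrightarrow> finite E \<and> {} \<in> \<I> \<and> (\<forall>X\<in>\<I>. X \<subseteq> E)
     \<and> (\<forall>X Y. Y \<in> \<I> \<and> X \<subseteq> Y \<longrightarrow> X \<in> \<I>)
     \<and> (\<forall>X Y. X \<in> \<I> \<and> Y \<in> \<I> \<and> card X < card Y \<longrightarrow> (\<exists>y\<in>Y - X. insert y X \<in> \<I>))"

definition mrank :: "'a set set \<Rightarrow> 'a set \<Rightarrow> nat" where
  "mrank \<I> A = Max (card ` {Y \<in> \<I>. Y \<subseteq> A})"

definition mlambda :: "'a set \<Rightarrow> 'a set set \<Rightarrow> 'a set \<Rightarrow> int" where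
  "mlambda E \<I> A = int (mrank \<I> E) - int (mrank \<I> A)"

definition mnu :: "'a set set \<Rightarrow> 'a set \<Rightarrow> int" where
  "mnu \<I> A = int (card A) - int (mrank \<I> A)"

definition free_product :: "'a set \<Rightarrow> 'a set set \<Rightarrow> 'a set \<Rightarrow> 'a set set \<Rightarrow> 'a set set" where
  "free_product S IS T IT =
     {A. A \<subseteq> S \<union> T \<and> A \<inter> S \<in> IS \<and> mlambda S IS (A \<inter> S) \<ge> mnu IT (A \<inter> T)}"

text \<open>Irreducible: nonempty, and every factorization M = N1 \<box> N2 has M as a factor.
  (By associativity, k-fold factorizations reduce to binary ones.)\<close>
definition irreducible_matroid :: "'a set \<Rightarrow> 'a set set \<Rightarrow> bool" where
  "irreducible_matroid E \<I> \<longleftrightarrow> matroid E \<I> \<and> E \<noteq> {} \<and>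
     (\<forall>S IS T IT. matroid S IS \<and> matroid T IT \<and> S \<inter> T = {} \<and> S \<union> T = E
        \<and> free_product S IS T IT = \<I> \<longrightarrow> (S, IS) = (E, \<I>) \<or> (T, IT) = (E, \<I>))"

definition matroid_iso :: "('a set \<times> 'a set set) \<Rightarrow> ('b set \<times> 'b set set) \<Rightarrow> bool" where
  "matroid_iso M N \<longleftrightarrow> (\<exists>f. bij_betw f (fst M) (fst N) \<and>
      (\<forall>X. X \<subseteq> fst M \<longrightarrow> (X \<in> snd M \<longleftrightarrow> f ` X \<in> snd N)))"

definition iso_rel :: "((nat set \<times> nat set set) \<times> (nat set \<times> nat set set)) set" where
  "iso_rel = {(M, N). matroid_iso M N}"

definition num_classes :: "nat \<Rightarrow> (nat set \<Rightarrow> nat set set \<Rightarrow> bool) \<Rightarrow> nat" where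
  "num_classes n P = card ({(E, \<I>). E = {0..<n} \<and> matroid E \<I> \<and> P E \<I>} // iso_rel)"

definition m_count :: "nat \<Rightarrow> nat" where
  "m_count n = num_classes n (\<lambda>_ _. True)"

definition i_count :: "nat \<Rightarrow> nat" where
  "i_count n = num_classes n irreducible_matroid"

definition m_count2 :: "nat \<Rightarrow> nat \<Rightarrow> nat" where
  "m_count2 r k = num_classes (r + k) (\<lambda>E \<I>. mrank \<I> E = r)"

definition i_count2 :: "nat \<Rightarrow> nat \<Rightarrow> nat" where
  "i_count2 r k = num_classes (r + k) (\<lambda>E \<I>. irreducible_matroid E \<I> \<and> mrank \<I> E = r)"

text \<open>Bivariate series in x, y as x-series with coefficients y-series.\<close>
definition biv :: "(nat \<Rightarrow> nat \<Rightarrow> nat) \<Rightarrow> rat fps fps" where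
  "biv c = Abs_fps (\<lambda>r. Abs_fps (\<lambda>k. of_nat (c r k)))"

end

theory Submission
  imports Defs
begin


lemma matroidD:
  assumes "matroid E I"
  shows "finite E" "{} \<in> I" "\<And>X. X \<in> I \<Longrightarrow> X \<subseteq> E"
    "\<And>X Y. Y \<in> I \<Longrightarrow> X \<subseteq> Y \<Longrightarrow> X \<in> I"
    "\<And>X Y. X \<in> I \<Longrightarrow> Y \<in> I \<Longrightarrow> card X < card Y \<Longrightarrow> \<exists>y\<in>Y - X. insert y X \<in> I"
  using assms unfolding matroid_def by blast+

context fixes E I assumes M: "matroid E I" begin

lemma m_fin: "finite E" using matroidD[OF M] by blast
lemma m_empty: "{} \<in> I" using matroidD[OF M] by blast
lemma m_sub: "X \<in> I \<Longrightarrow> X \<subseteq> E" using matroidD[OF M] by blast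
lemma m_down: "Y \<in> I \<Longrightarrow> X \<subseteq> Y \<Longrightarrow> X \<in> I" using matroidD[OF M] by blast
lemma m_aug: "X \<in> I \<Longrightarrow> Y \<in> I \<Longrightarrow> card X < card Y \<Longrightarrow> \<exists>y\<in>Y - X. insert y X \<in> I"
  using matroidD[OF M] by blast
lemma m_finI: "X \<in> I \<Longrightarrow> finite X" using m_sub m_fin finite_subset by blast

lemma rk_set_fin: "finite {Y \<in> I. Y \<subseteq> A}"
proof -
  have "{Y \<in> I. Y \<subseteq> A} \<subseteq> Pow E" using m_sub by blast
  then show ?thesis using m_fin finite_subset by blast
qed

lemma rk_ex: "\<exists>Y. Y \<in> I \<and> Y \<subseteq> A \<and> card Y = mrank I A"
proof -
  have ne: "card ` {Y \<in> I. Y \<subseteq> A} \<noteq> {}" using m_empty by blast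
  have "mrank I A \<in> card ` {Y \<in> I. Y \<subseteq> A}"
    unfolding mrank_def using Max_in[OF finite_imageI[OF rk_set_fin] ne] .
  then show ?thesis by force
qed

lemma rk_ge: "Y \<in> I \<Longrightarrow> Y \<subseteq> A \<Longrightarrow> card Y \<le> mrank I A"
  unfolding mrank_def by (rule Max_ge) (use rk_set_fin in auto)

lemma rk_ext: "X \<in> I \<Longrightarrow> X \<subseteq> A \<Longrightarrow> \<exists>Y. X \<subseteq> Y \<and> Y \<subseteq> A \<and> Y \<in> I \<and> card Y = mrank I A"
proof (induction "mrank I A - card X" arbitrary: X rule: less_induct)
  case less
  have le: "card X \<le> mrank I A" using rk_ge less by blast
  show ?case
  proof (cases "card X = mrank I A")
    case True then show ?thesis using less by blast
  next
    case False
    then have lt: "card X < mrank I A" using le by simp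
    obtain Z where Z: "Z \<in> I" "Z \<subseteq> A" "card Z = mrank I A" using rk_ex by blast
    obtain z where z: "z \<in> Z - X" "insert z X \<in> I" using m_aug[OF less(2) Z(1)] lt Z(3) by auto
    have cX: "card (insert z X) = Suc (card X)" using z m_finI[OF less(2)] by simp
    have "mrank I A - card (insert z X) < mrank I A - card X" using cX lt by simp
    then obtain Y where "insert z X \<subseteq> Y \<and> Y \<subseteq> A \<and> Y \<in> I \<and> card Y = mrank I A"
      using less(1)[of "insert z X"] z Z less(3) by blast
    then show ?thesis by blast
  qed
qed

lemma rk_mono: "A \<subseteq> B \<Longrightarrow> mrank I A \<le> mrank I B"
proof -
  assume "A \<subseteq> B"
  obtain Y where "Y \<in> I" "Y \<subseteq> A" "card Y = mrank I A" using rk_ex by blast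
  then show ?thesis using rk_ge[of Y B] \<open>A \<subseteq> B\<close> by simp
qed

lemma rk_le_card: "finite A \<Longrightarrow> mrank I A \<le> card A"
proof -
  assume "finite A"
  obtain Y where "Y \<in> I" "Y \<subseteq> A" "card Y = mrank I A" using rk_ex by blast
  then show ?thesis using card_mono[OF \<open>finite A\<close>] by metis
qed

lemma rk_le_E: "mrank I A \<le> mrank I E"
proof -
  obtain Y where "Y \<in> I" "Y \<subseteq> A" "card Y = mrank I A" using rk_ex by blast
  then show ?thesis using rk_ge[of Y E] m_sub by simp
qed

lemma rk_indep: "X \<in> I \<Longrightarrow> mrank I X = card X"
  using rk_ge[of X X] rk_le_card[of X] m_finI by (meson dual_order.antisym order_refl)

lemma rk_empty: "mrank I {} = 0"
  using rk_indep[OF m_empty] by simp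

lemma indep_iff: "X \<subseteq> E \<Longrightarrow> X \<in> I \<longleftrightarrow> mrank I X = card X"
proof
  assume "X \<subseteq> E" "mrank I X = card X"
  obtain Y where Y: "Y \<in> I" "Y \<subseteq> X" "card Y = mrank I X" using rk_ex by blast
  have "finite X" using \<open>X \<subseteq> E\<close> m_fin finite_subset by blast
  then have "Y = X" using Y \<open>mrank I X = card X\<close> card_subset_eq by metis
  then show "X \<in> I" using Y by simp
qed (use rk_indep in auto)

lemma rk_union_card: "finite B \<Longrightarrow> mrank I (A \<union> B) \<le> mrank I A + card B"
proof -
  assume fB: "finite B"
  obtain Y where Y: "Y \<in> I" "Y \<subseteq> A \<union> B" "card Y = mrank I (A \<union> B)" using rk_ex by blast
  have fY: "finite Y" using m_finI Y by blast
  have eq: "Y = (Y \<inter> A) \<union> (Y \<inter> B)" using Y by blast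
  have "card Y \<le> card (Y \<inter> A) + card (Y \<inter> B)"
    using card_Un_le[of "Y \<inter> A" "Y \<inter> B"] eq by simp
  moreover have "card (Y \<inter> A) \<le> mrank I A"
    by (rule rk_ge) (use m_down[OF Y(1)] in auto)
  moreover have "card (Y \<inter> B) \<le> card B" using fB by (simp add: card_mono)
  ultimately show ?thesis using Y(3) by linarith
qed

lemma rk_submod: "mrank I (A \<union> B) + mrank I (A \<inter> B) \<le> mrank I A + mrank I B"
proof -
  obtain Z where Z: "Z \<in> I" "Z \<subseteq> A \<inter> B" "card Z = mrank I (A \<inter> B)" using rk_ex by blast
  obtain Y where Y: "Z \<subseteq> Y" "Y \<subseteq> A \<union> B" "Y \<in> I" "card Y = mrank I (A \<union> B)"
    using rk_ext[OF Z(1), of "A \<union> B"] Z(2) by blast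
  have fY: "finite Y" using m_finI Y(3) by blast
  have 1: "card (Y \<inter> A) \<le> mrank I A" by (rule rk_ge) (use m_down[OF Y(3)] in auto)
  have 2: "card (Y \<inter> B) \<le> mrank I B" by (rule rk_ge) (use m_down[OF Y(3)] in auto)
  have 3: "card (Y \<inter> A) + card (Y \<inter> B) = card ((Y \<inter> A) \<union> (Y \<inter> B)) + card ((Y \<inter> A) \<inter> (Y \<inter> B))"
    by (rule card_Un_Int) (use fY in auto)
  have 4: "(Y \<inter> A) \<union> (Y \<inter> B) = Y" using Y(2) by blast
  have 5: "card Z \<le> card ((Y \<inter> A) \<inter> (Y \<inter> B))"
    by (rule card_mono) (use Y(1) Z(2) fY in auto)
  have 6: "card (Y \<inter> A) + card (Y \<inter> B) = card Y + card ((Y \<inter> A) \<inter> (Y \<inter> B))"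
    using 3 unfolding 4 .
  show ?thesis using 1 2 5 6 Y(4) Z(3) by linarith
qed

lemma rk_insert: "mrank I (insert e A) \<le> Suc (mrank I A)"
  using rk_union_card[of "{e}" A] by simp

lemma rk_increase:
  assumes "mrank I Y1 < mrank I Y2"
  shows "\<exists>y\<in>Y2 - Y1. mrank I (insert y Y1) = Suc (mrank I Y1)"
proof -
  obtain Z1 where Z1: "Z1 \<in> I" "Z1 \<subseteq> Y1" "card Z1 = mrank I Y1" using rk_ex by blast
  obtain Z2 where Z2: "Z2 \<in> I" "Z2 \<subseteq> Y2" "card Z2 = mrank I Y2" using rk_ex by blast
  have "card Z1 < card Z2" using Z1(3) Z2(3) assms by simp
  then obtain y where y: "y \<in> Z2 - Z1" "insert y Z1 \<in> I" using m_aug[OF Z1(1) Z2(1)] by blast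
  have c: "card (insert y Z1) = Suc (card Z1)" using y(1) m_finI[OF Z1(1)] by simp
  have ny: "y \<notin> Y1"
  proof
    assume "y \<in> Y1"
    then have "insert y Z1 \<subseteq> Y1" using Z1(2) by blast
    then have "card (insert y Z1) \<le> mrank I Y1" using rk_ge[OF y(2)] by blast
    then show False using c Z1(3) by simp
  qed
  have "insert y Z1 \<subseteq> insert y Y1" using Z1(2) by blast
  then have "Suc (mrank I Y1) \<le> mrank I (insert y Y1)"
    using rk_ge[OF y(2)] c Z1(3) by simp
  moreover have "y \<in> Y2 - Y1" using ny y(1) Z2(2) by blast
  ultimately show ?thesis using rk_insert[of y Y1] le_antisym by blast
qed

end


definition restr :: "'a set set \<Rightarrow> 'a set \<Rightarrow> 'a set set" where
  "restr I S = {X \<in> I. X \<subseteq> S}"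

definition contr :: "'a set \<Rightarrow> 'a set set \<Rightarrow> 'a set \<Rightarrow> 'a set set" where
  "contr E I S = {Y. Y \<subseteq> E - S \<and> mrank I (Y \<union> S) = card Y + mrank I S}"

definition sep :: "'a set \<Rightarrow> 'a set set \<Rightarrow> 'a set \<Rightarrow> bool" where
  "sep E I S \<longleftrightarrow> S \<subseteq> E \<and> (\<forall>X Y. X \<subseteq> S \<longrightarrow> Y \<subseteq> E - S \<longrightarrow>
      min (mrank I X + card Y) (mrank I (S \<union> Y)) \<le> mrank I (X \<union> Y))"

lemma rk_restr: "X \<subseteq> S \<Longrightarrow> mrank (restr I S) X = mrank I X"
proof -
  assume "X \<subseteq> S"
  then have "{Y \<in> restr I S. Y \<subseteq> X} = {Y \<in> I. Y \<subseteq> X}" unfolding restr_def by blast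
  then show ?thesis unfolding mrank_def by simp
qed

lemma mem_restr: "X \<in> restr I S \<longleftrightarrow> X \<in> I \<and> X \<subseteq> S"
  unfolding restr_def by blast

lemma restr_restr: "S \<subseteq> U \<Longrightarrow> restr (restr I U) S = restr I S"
  unfolding restr_def by blast

lemma sepD: "sep E I S \<Longrightarrow> X \<subseteq> S \<Longrightarrow> Y \<subseteq> E - S \<Longrightarrow>
      min (mrank I X + card Y) (mrank I (S \<union> Y)) \<le> mrank I (X \<union> Y)"
  unfolding sep_def by blast

lemma sepD2: "sep E I S \<Longrightarrow> S \<subseteq> E"
  unfolding sep_def by blast

context fixes E I assumes M: "matroid E I" begin

lemma restr_E: "restr I E = I"
  using m_sub[OF M] unfolding restr_def by blast

lemma matroid_restr:
  assumes S: "S \<subseteq> E"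
  shows "matroid S (restr I S)"
  unfolding matroid_def restr_def
proof (intro conjI allI impI)
  show "finite S" using S m_fin[OF M] finite_subset by blast
  show "{} \<in> {X \<in> I. X \<subseteq> S}" using m_empty[OF M] by blast
  show "\<forall>X\<in>{X \<in> I. X \<subseteq> S}. X \<subseteq> S" by blast
next
  fix X Y assume "Y \<in> {X \<in> I. X \<subseteq> S} \<and> X \<subseteq> Y"
  then show "X \<in> {X \<in> I. X \<subseteq> S}" using m_down[OF M] by blast
next
  fix X Y assume a: "X \<in> {X \<in> I. X \<subseteq> S} \<and> Y \<in> {X \<in> I. X \<subseteq> S} \<and> card X < card Y"
  then obtain y where "y \<in> Y - X" "insert y X \<in> I" using m_aug[OF M, of X Y] by blast
  then show "\<exists>y\<in>Y - X. insert y X \<in> {X \<in> I. X \<subseteq> S}" using a by blast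
qed

lemma contr_basis:
  assumes S: "S \<subseteq> E" and X0: "X0 \<in> I" "X0 \<subseteq> S" "card X0 = mrank I S"
  shows "contr E I S = {Y. Y \<subseteq> E - S \<and> Y \<union> X0 \<in> I}"
proof (intro set_eqI iffI)
  fix Y assume "Y \<in> {Y. Y \<subseteq> E - S \<and> Y \<union> X0 \<in> I}"
  then have Y: "Y \<subseteq> E - S" "Y \<union> X0 \<in> I" by auto
  have fY: "finite Y" using Y(1) m_fin[OF M] finite_subset by blast
  have fX: "finite X0" using m_finI[OF M X0(1)] .
  have dis: "Y \<inter> X0 = {}" using Y(1) X0(2) by blast
  have "card (Y \<union> X0) \<le> mrank I (Y \<union> S)" by (rule rk_ge[OF M Y(2)]) (use X0(2) in blast)
  moreover have "card (Y \<union> X0) = card Y + card X0" using card_Un_disjoint[OF fY fX dis] .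
  moreover have "mrank I (S \<union> Y) \<le> mrank I S + card Y" using rk_union_card[OF M fY] .
  moreover have "S \<union> Y = Y \<union> S" by blast
  ultimately have "mrank I (Y \<union> S) = card Y + mrank I S" using X0(3) by simp
  then show "Y \<in> contr E I S" unfolding contr_def using Y(1) by blast
next
  fix Y assume "Y \<in> contr E I S"
  then have Y: "Y \<subseteq> E - S" "mrank I (Y \<union> S) = card Y + mrank I S" unfolding contr_def by auto
  have fY: "finite Y" using Y(1) m_fin[OF M] finite_subset by blast
  obtain W where W: "X0 \<subseteq> W" "W \<subseteq> Y \<union> S" "W \<in> I" "card W = mrank I (Y \<union> S)"
    using rk_ext[OF M X0(1), of "Y \<union> S"] X0(2) by blast
  have fW: "finite W" using m_finI[OF M W(3)] .
  have c1: "card (W \<inter> S) \<le> mrank I S" by (rule rk_ge[OF M]) (use m_down[OF M W(3)] in auto)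
  have eqW: "W = (W \<inter> S) \<union> (W \<inter> Y)" using W(2) by blast
  have "card ((W \<inter> S) \<union> (W \<inter> Y)) = card (W \<inter> S) + card (W \<inter> Y)"
    by (rule card_Un_disjoint) (use fW Y(1) in auto)
  then have "card W = card (W \<inter> S) + card (W \<inter> Y)" using eqW by simp
  then have "card Y \<le> card (W \<inter> Y)" using c1 W(4) Y(2) by linarith
  then have "W \<inter> Y = Y" using card_subset_eq[OF fY, of "W \<inter> Y"] card_mono[OF fY, of "W \<inter> Y"] by auto
  then have "Y \<union> X0 \<subseteq> W" using W(1) by blast
  then show "Y \<in> {Y. Y \<subseteq> E - S \<and> Y \<union> X0 \<in> I}" using m_down[OF M W(3)] Y(1) by blast
qed

lemma matroid_contr:
  assumes S: "S \<subseteq> E"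
  shows "matroid (E - S) (contr E I S)"
proof -
  obtain X0 where X0: "X0 \<in> I" "X0 \<subseteq> S" "card X0 = mrank I S" using rk_ex[OF M] by blast
  have C: "contr E I S = {Y. Y \<subseteq> E - S \<and> Y \<union> X0 \<in> I}" using contr_basis[OF S X0] .
  have fX: "finite X0" using m_finI[OF M X0(1)] .
  show ?thesis unfolding matroid_def C
  proof (intro conjI allI impI)
    show "finite (E - S)" using m_fin[OF M] by simp
    show "{} \<in> {Y. Y \<subseteq> E - S \<and> Y \<union> X0 \<in> I}" using X0 by simp
    show "\<forall>X\<in>{Y. Y \<subseteq> E - S \<and> Y \<union> X0 \<in> I}. X \<subseteq> E - S" by blast
  next
    fix X Y assume "Y \<in> {Y. Y \<subseteq> E - S \<and> Y \<union> X0 \<in> I} \<and> X \<subseteq> Y"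
    then show "X \<in> {Y. Y \<subseteq> E - S \<and> Y \<union> X0 \<in> I}"
      using m_down[OF M, of "Y \<union> X0" "X \<union> X0"] by blast
  next
    fix X Y assume a: "X \<in> {Y. Y \<subseteq> E - S \<and> Y \<union> X0 \<in> I} \<and> Y \<in> {Y. Y \<subseteq> E - S \<and> Y \<union> X0 \<in> I} \<and> card X < card Y"
    then have X: "X \<subseteq> E - S" "X \<union> X0 \<in> I" and Y: "Y \<subseteq> E - S" "Y \<union> X0 \<in> I" and c: "card X < card Y"
      by auto
    have fXX: "finite X" "finite Y" using X Y m_fin[OF M] finite_subset by blast+
    have "card (X \<union> X0) = card X + card X0"
      by (rule card_Un_disjoint) (use fXX fX X X0 in auto)
    moreover have "card (Y \<union> X0) = card Y + card X0"
      by (rule card_Un_disjoint) (use fXX fX Y X0 in auto)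
    ultimately have "card (X \<union> X0) < card (Y \<union> X0)" using c by simp
    then obtain y where y: "y \<in> (Y \<union> X0) - (X \<union> X0)" "insert y (X \<union> X0) \<in> I"
      using m_aug[OF M X(2) Y(2)] by blast
    then have "y \<in> Y - X" "insert y X \<union> X0 \<in> I" by auto
    note this
    moreover have "insert y X \<subseteq> E - S" using X(1) Y(1) \<open>y \<in> Y - X\<close> by blast
    ultimately show "\<exists>y\<in>Y - X. insert y X \<in> {Y. Y \<subseteq> E - S \<and> Y \<union> X0 \<in> I}" by blast
  qed
qed

lemma rk_contr:
  assumes S: "S \<subseteq> E" and Y: "Y \<subseteq> E - S"
  shows "mrank (contr E I S) Y + mrank I S = mrank I (Y \<union> S)"
proof -
  obtain X0 where X0: "X0 \<in> I" "X0 \<subseteq> S" "card X0 = mrank I S" using rk_ex[OF M] by blast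
  have C: "contr E I S = {Y. Y \<subseteq> E - S \<and> Y \<union> X0 \<in> I}" using contr_basis[OF S X0] .
  have MC: "matroid (E - S) (contr E I S)" using matroid_contr[OF S] .
  have fX: "finite X0" using m_finI[OF M X0(1)] .
  obtain Y' where Y': "Y' \<in> contr E I S" "Y' \<subseteq> Y" "card Y' = mrank (contr E I S) Y"
    using rk_ex[OF MC] by blast
  have Y'2: "Y' \<subseteq> E - S" "Y' \<union> X0 \<in> I" using Y'(1) C by auto
  have fY': "finite Y'" using Y'2 m_fin[OF M] finite_subset by blast
  have "card (Y' \<union> X0) = card Y' + card X0"
    by (rule card_Un_disjoint) (use fY' fX Y'2 X0 in auto)
  moreover have "card (Y' \<union> X0) \<le> mrank I (Y \<union> S)"
    by (rule rk_ge[OF M Y'2(2)]) (use Y'(2) X0(2) in blast)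
  ultimately have le: "mrank (contr E I S) Y + mrank I S \<le> mrank I (Y \<union> S)" using Y'(3) X0(3) by simp
  obtain W where W: "X0 \<subseteq> W" "W \<subseteq> Y \<union> S" "W \<in> I" "card W = mrank I (Y \<union> S)"
    using rk_ext[OF M X0(1), of "Y \<union> S"] X0(2) by blast
  have fW: "finite W" using m_finI[OF M W(3)] .
  have c1: "card (W \<inter> S) \<le> mrank I S" by (rule rk_ge[OF M]) (use m_down[OF M W(3)] in auto)
  have cW: "card W = card (W \<inter> S) + card (W - S)"
    using card_Int_Diff[OF fW] by simp
  have "(W - S) \<union> X0 \<subseteq> W" using W(1) by blast
  then have "(W - S) \<union> X0 \<in> I" using m_down[OF M W(3)] by blast
  moreover have "W - S \<subseteq> E - S" using m_sub[OF M W(3)] by blast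
  ultimately have "W - S \<in> contr E I S" using C by blast
  moreover have "W - S \<subseteq> Y" using W(2) by blast
  ultimately have "card (W - S) \<le> mrank (contr E I S) Y" using rk_ge[OF MC] by blast
  then have "mrank I (Y \<union> S) \<le> mrank (contr E I S) Y + mrank I S" using cW c1 W(4) by linarith
  then show ?thesis using le by linarith
qed

lemma sep_char:
  assumes sp: "sep E I S" and J: "J \<subseteq> E"
  shows "J \<in> I \<longleftrightarrow> J \<inter> S \<in> I \<and> card J \<le> mrank I (S \<union> (J - S))"
proof
  assume "J \<in> I"
  moreover have "J \<inter> S \<in> I" using m_down[OF M \<open>J \<in> I\<close>] by blast
  moreover have "card J \<le> mrank I (S \<union> (J - S))" using rk_ge[OF M \<open>J \<in> I\<close>, of "S \<union> (J - S)"] by blast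
  ultimately show "J \<inter> S \<in> I \<and> card J \<le> mrank I (S \<union> (J - S))" by blast
next
  assume a: "J \<inter> S \<in> I \<and> card J \<le> mrank I (S \<union> (J - S))"
  have S: "S \<subseteq> E" using sp unfolding sep_def by blast
  have fJ: "finite J" using J m_fin[OF M] finite_subset by blast
  have "min (mrank I (J \<inter> S) + card (J - S)) (mrank I (S \<union> (J - S))) \<le> mrank I ((J \<inter> S) \<union> (J - S))"
    using sepD[OF sp, of "J \<inter> S" "J - S"] J by blast
  moreover have "(J \<inter> S) \<union> (J - S) = J" by blast
  moreover have "mrank I (J \<inter> S) = card (J \<inter> S)" using rk_indep[OF M] a by blast
  moreover have "card J = card (J \<inter> S) + card (J - S)" using card_Int_Diff[OF fJ] by simp
  ultimately have "card J \<le> mrank I J" using a by simp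
  then have "mrank I J = card J" using rk_le_card[OF M fJ] by simp
  then show "J \<in> I" using indep_iff[OF M J] by simp
qed

lemma sep_decomp:
  assumes sp: "sep E I S"
  shows "free_product S (restr I S) (E - S) (contr E I S) = I"
proof -
  have S: "S \<subseteq> E" using sp unfolding sep_def by blast
  have SE: "S \<union> (E - S) = E" using S by blast
  show ?thesis
  proof (intro set_eqI)
    fix J
    show "J \<in> free_product S (restr I S) (E - S) (contr E I S) \<longleftrightarrow> J \<in> I"
    proof (cases "J \<subseteq> E")
      case False
      then show ?thesis using m_sub[OF M] unfolding free_product_def SE by blast
    next
      case J: True
      have fJ: "finite J" using J m_fin[OF M] finite_subset by blast
      have e1: "J \<inter> (E - S) = J - S" using J by blast
      have r2: "mrank (contr E I S) (J - S) + mrank I S = mrank I ((J - S) \<union> S)"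
        using rk_contr[OF S, of "J - S"] J by blast
      have cJ: "card J = card (J \<inter> S) + card (J - S)" using card_Int_Diff[OF fJ] by simp
      have "J \<in> free_product S (restr I S) (E - S) (contr E I S) \<longleftrightarrow>
          J \<inter> S \<in> I \<and> int (mrank I S) - int (mrank I (J \<inter> S)) \<ge> int (card (J - S)) - int (mrank (contr E I S) (J - S))"
        unfolding free_product_def mlambda_def mnu_def SE using J e1
        by (simp add: mem_restr rk_restr)
      also have "\<dots> \<longleftrightarrow> J \<inter> S \<in> I \<and> card J \<le> mrank I (S \<union> (J - S))"
      proof -
        have "J \<inter> S \<in> I \<Longrightarrow> mrank I (J \<inter> S) = card (J \<inter> S)" using rk_indep[OF M] by blast
        moreover have "(J - S) \<union> S = S \<union> (J - S)" by blast
        ultimately show ?thesis using r2 cJ by auto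
      qed
      also have "\<dots> \<longleftrightarrow> J \<in> I" using sep_char[OF sp J] by simp
      finally show ?thesis .
    qed
  qed
qed

end


lemma nullity_mono:
  assumes M: "matroid E I" and "Y' \<subseteq> Y" "finite Y"
  shows "card Y' + mrank I Y \<le> card Y + mrank I Y'"
proof -
  have fD: "finite (Y - Y')" using assms(3) by simp
  have "Y = Y' \<union> (Y - Y')" using assms(2) by blast
  then have "mrank I Y \<le> mrank I Y' + card (Y - Y')" using rk_union_card[OF M fD, of Y'] by simp
  moreover have "card Y = card Y' + card (Y - Y')"
    using card_Diff_subset[OF finite_subset[OF assms(2,3)] assms(2)] card_mono[OF assms(3,2)] by simp
  ultimately show ?thesis by linarith
qed

lemma exists_between:
  assumes "finite B" "A \<subseteq> B" "card A \<le> m" "m \<le> card B"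
  shows "\<exists>C. A \<subseteq> C \<and> C \<subseteq> B \<and> card C = m"
proof -
  have fA: "finite A" using assms finite_subset by blast
  have "card (B - A) = card B - card A" using card_Diff_subset[OF fA assms(2)] .
  then have "m - card A \<le> card (B - A)" using assms by simp
  then obtain D where D: "D \<subseteq> B - A" "card D = m - card A"
    using obtain_subset_with_card_n by metis
  have fD: "finite D" using D(1) assms(1) finite_subset by blast
  have "card (A \<union> D) = card A + card D" by (rule card_Un_disjoint) (use fA fD D in auto)
  then show ?thesis using D assms(2,3) by (intro exI[of _ "A \<union> D"]) auto
qed

context
  fixes S A T B
  assumes MA: "matroid S A" and MB: "matroid T B" and dis: "S \<inter> T = {}"
begin

lemma fp_mem: "X \<in> free_product S A T B \<longleftrightarrow>
   X \<subseteq> S \<union> T \<and> X \<inter> S \<in> A \<and> card (X \<inter> S) + card (X \<inter> T) \<le> mrank A S + mrank B (X \<inter> T)"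
proof -
  have "X \<inter> S \<in> A \<Longrightarrow> mrank A (X \<inter> S) = card (X \<inter> S)" using rk_indep[OF MA] by blast
  moreover have "X \<inter> S \<in> A \<Longrightarrow> mrank A (X \<inter> S) \<le> mrank A S" using rk_le_E[OF MA] by blast
  ultimately show ?thesis unfolding free_product_def mlambda_def mnu_def by auto
qed

lemma card_split: "X \<subseteq> S \<union> T \<Longrightarrow> card X = card (X \<inter> S) + card (X \<inter> T)"
proof -
  assume X: "X \<subseteq> S \<union> T"
  have fX: "finite X" using X m_fin[OF MA] m_fin[OF MB] finite_subset by blast
  have "X = (X \<inter> S) \<union> (X \<inter> T)" using X by blast
  moreover have "card ((X \<inter> S) \<union> (X \<inter> T)) = card (X \<inter> S) + card (X \<inter> T)"
    by (rule card_Un_disjoint) (use fX dis in auto)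
  ultimately show ?thesis by simp
qed

lemma fp_matroid: "matroid (S \<union> T) (free_product S A T B)"
  unfolding matroid_def
proof (intro conjI allI impI ballI)
  show "finite (S \<union> T)" using m_fin[OF MA] m_fin[OF MB] by simp
  show "{} \<in> free_product S A T B" unfolding fp_mem using m_empty[OF MA] by simp
next
  fix X assume "X \<in> free_product S A T B"
  then show "X \<subseteq> S \<union> T" unfolding fp_mem by blast
next
  fix X Y assume a: "Y \<in> free_product S A T B \<and> X \<subseteq> Y"
  then have Y: "Y \<subseteq> S \<union> T" "Y \<inter> S \<in> A" "card (Y \<inter> S) + card (Y \<inter> T) \<le> mrank A S + mrank B (Y \<inter> T)"
    and XY: "X \<subseteq> Y" unfolding fp_mem by auto
  have fY: "finite (Y \<inter> T)" "finite (Y \<inter> S)" using m_fin[OF MB] m_fin[OF MA] by auto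
  have n: "card (X \<inter> T) + mrank B (Y \<inter> T) \<le> card (Y \<inter> T) + mrank B (X \<inter> T)"
    using nullity_mono[OF MB _ fY(1), of "X \<inter> T"] XY by blast
  have c: "card (X \<inter> S) \<le> card (Y \<inter> S)" using card_mono[OF fY(2)] XY by blast
  have "X \<inter> S \<in> A" using m_down[OF MA Y(2)] XY by blast
  moreover have "X \<subseteq> S \<union> T" using XY Y(1) by blast
  ultimately show "X \<in> free_product S A T B" unfolding fp_mem using n c Y(3) by linarith
next
  fix X Y assume a: "X \<in> free_product S A T B \<and> Y \<in> free_product S A T B \<and> card X < card Y"
  then have X: "X \<subseteq> S \<union> T" "X \<inter> S \<in> A" "card (X \<inter> S) + card (X \<inter> T) \<le> mrank A S + mrank B (X \<inter> T)"
    and Y: "Y \<subseteq> S \<union> T" "Y \<inter> S \<in> A" "card (Y \<inter> S) + card (Y \<inter> T) \<le> mrank A S + mrank B (Y \<inter> T)"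
    and c: "card X < card Y" unfolding fp_mem by auto
  have cX: "card X = card (X \<inter> S) + card (X \<inter> T)" using card_split[OF X(1)] .
  have cY: "card Y = card (Y \<inter> S) + card (Y \<inter> T)" using card_split[OF Y(1)] .
  have fX: "finite X" using X(1) m_fin[OF MA] m_fin[OF MB] finite_subset by blast
  show "\<exists>y\<in>Y - X. insert y X \<in> free_product S A T B"
  proof (cases "card (X \<inter> S) + card (X \<inter> T) < mrank A S + mrank B (X \<inter> T)")
    case nt: True
    show ?thesis
    proof (cases "Y \<inter> T \<subseteq> X \<inter> T")
      case False
      then obtain y where y: "y \<in> Y \<inter> T" "y \<notin> X" by blast
      have yS: "y \<notin> S" using y dis by blast
      have e1: "insert y X \<inter> S = X \<inter> S" using yS by blast
      have e2: "insert y X \<inter> T = insert y (X \<inter> T)" using y by blast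
      have "card (insert y (X \<inter> T)) = Suc (card (X \<inter> T))" using y fX by simp
      moreover have "mrank B (X \<inter> T) \<le> mrank B (insert y (X \<inter> T))" using rk_mono[OF MB] by blast
      moreover have "insert y X \<subseteq> S \<union> T" using X(1) y by blast
      ultimately have "insert y X \<in> free_product S A T B" unfolding fp_mem e1 e2 using X(2) nt by linarith
      then show ?thesis using y by blast
    next
      case True
      have "card (Y \<inter> T) \<le> card (X \<inter> T)" using card_mono[OF _ True] fX by simp
      then have "card (X \<inter> S) < card (Y \<inter> S)" using c cX cY by linarith
      then obtain x where x: "x \<in> (Y \<inter> S) - (X \<inter> S)" "insert x (X \<inter> S) \<in> A"
        using m_aug[OF MA X(2) Y(2)] by blast
      have xT: "x \<notin> T" using x dis by blast
      have e1: "insert x X \<inter> S = insert x (X \<inter> S)" using x by blast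
      have e2: "insert x X \<inter> T = X \<inter> T" using xT by blast
      have "x \<notin> X \<inter> S" using x(1) by blast
      then have "card (insert x (X \<inter> S)) = Suc (card (X \<inter> S))" using fX by simp
      moreover have "insert x X \<subseteq> S \<union> T" using X(1) x by blast
      ultimately have "insert x X \<in> free_product S A T B" unfolding fp_mem e1 e2 using x(2) nt by linarith
      then show ?thesis using x by blast
    qed
  next
    case tight: False
    have "mrank B (X \<inter> T) < mrank B (Y \<inter> T)" using tight X(3) Y(3) c cX cY by linarith
    then obtain y where y: "y \<in> (Y \<inter> T) - (X \<inter> T)" "mrank B (insert y (X \<inter> T)) = Suc (mrank B (X \<inter> T))"
      using rk_increase[OF MB] by blast
    have yS: "y \<notin> S" using y dis by blast
    have yX: "y \<notin> X" using y by blast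
    have e1: "insert y X \<inter> S = X \<inter> S" using yS by blast
    have e2: "insert y X \<inter> T = insert y (X \<inter> T)" using y by blast
    have "card (insert y (X \<inter> T)) = Suc (card (X \<inter> T))" using yX fX by simp
    moreover have "insert y X \<subseteq> S \<union> T" using X(1) y by blast
    ultimately have "insert y X \<in> free_product S A T B" unfolding fp_mem e1 e2 using X(2,3) y(2) by linarith
    then show ?thesis using y by blast
  qed
qed

lemma fp_rank:
  assumes Z: "Z \<subseteq> S \<union> T"
  shows "mrank (free_product S A T B) Z = min (mrank A (Z \<inter> S) + card (Z \<inter> T)) (mrank A S + mrank B (Z \<inter> T))"
proof -
  let ?K = "free_product S A T B"
  have MK: "matroid (S \<union> T) ?K" by (rule fp_matroid)
  have fZT: "finite (Z \<inter> T)" using m_fin[OF MB] by simp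
  obtain W where W: "W \<in> ?K" "W \<subseteq> Z" "card W = mrank ?K Z" using rk_ex[OF MK] by blast
  have W2: "W \<subseteq> S \<union> T" "W \<inter> S \<in> A" "card (W \<inter> S) + card (W \<inter> T) \<le> mrank A S + mrank B (W \<inter> T)"
    using W(1) unfolding fp_mem by auto
  have cW: "card W = card (W \<inter> S) + card (W \<inter> T)" using card_split[OF W2(1)] .
  have a1: "card (W \<inter> S) \<le> mrank A (Z \<inter> S)" using rk_ge[OF MA W2(2)] W(2) by blast
  have WZT: "W \<inter> T \<subseteq> Z \<inter> T" using W(2) by blast
  have a2: "card (W \<inter> T) \<le> card (Z \<inter> T)" using card_mono[OF fZT WZT] .
  have a3: "mrank B (W \<inter> T) \<le> mrank B (Z \<inter> T)" using rk_mono[OF MB WZT] .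
  have le1: "mrank ?K Z \<le> mrank A (Z \<inter> S) + card (Z \<inter> T)"
    using a1 a2 cW W(3) by linarith
  have le2: "mrank ?K Z \<le> mrank A S + mrank B (Z \<inter> T)"
    using a3 W2(3) cW W(3) by linarith
  have le: "mrank ?K Z \<le> min (mrank A (Z \<inter> S) + card (Z \<inter> T)) (mrank A S + mrank B (Z \<inter> T))"
    using le1 le2 by (rule min.boundedI)
  obtain X0 where X0: "X0 \<in> A" "X0 \<subseteq> Z \<inter> S" "card X0 = mrank A (Z \<inter> S)" using rk_ex[OF MA] by blast
  obtain Y0 where Y0: "Y0 \<in> B" "Y0 \<subseteq> Z \<inter> T" "card Y0 = mrank B (Z \<inter> T)" using rk_ex[OF MB] by blast
  define m where "m = min (card (Z \<inter> T)) (mrank B (Z \<inter> T) + (mrank A S - mrank A (Z \<inter> S)))"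
  have m1: "card Y0 \<le> m" unfolding m_def using Y0(3) rk_le_card[OF MB fZT] by (intro min.boundedI) linarith+
  have m2: "m \<le> card (Z \<inter> T)" unfolding m_def by (rule min.cobounded1)
  obtain Y' where Y': "Y0 \<subseteq> Y'" "Y' \<subseteq> Z \<inter> T" "card Y' = m"
    using exists_between[OF fZT Y0(2) m1 m2] by blast
  have rA: "mrank A (Z \<inter> S) \<le> mrank A S" using rk_le_E[OF MA] .
  have rY': "mrank B (Z \<inter> T) \<le> mrank B Y'" using rk_ge[OF MB Y0(1) Y'(1)] Y0(3) by simp
  have e1: "(X0 \<union> Y') \<inter> S = X0" using X0(2) Y'(2) dis by blast
  have e2: "(X0 \<union> Y') \<inter> T = Y'" using X0(2) Y'(2) dis by blast
  have "m \<le> mrank B (Z \<inter> T) + (mrank A S - mrank A (Z \<inter> S))" unfolding m_def by (rule min.cobounded2)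
  then have "card X0 + card Y' \<le> mrank A S + mrank B Y'"
    using X0(3) Y'(3) rA rY' by linarith
  moreover have "X0 \<union> Y' \<subseteq> S \<union> T" using X0(2) Y'(2) by blast
  ultimately have WK: "X0 \<union> Y' \<in> ?K" unfolding fp_mem e1 e2 using X0(1) by blast
  have "card (X0 \<union> Y') = card X0 + card Y'"
    using card_split[OF \<open>X0 \<union> Y' \<subseteq> S \<union> T\<close>] unfolding e1 e2 .
  moreover have "card (X0 \<union> Y') \<le> mrank ?K Z" using rk_ge[OF MK WK] X0(2) Y'(2) by blast
  ultimately have ge: "mrank A (Z \<inter> S) + m \<le> mrank ?K Z" using X0(3) Y'(3) by linarith
  have "mrank A (Z \<inter> S) + m = min (mrank A (Z \<inter> S) + card (Z \<inter> T)) (mrank A S + mrank B (Z \<inter> T))"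
    unfolding m_def using rA apply (simp add: min_def) apply arith done
  then show ?thesis using le ge by linarith
qed

lemma fp_rank_S: "X \<subseteq> S \<Longrightarrow> mrank (free_product S A T B) X = mrank A X"
proof -
  assume X: "X \<subseteq> S"
  have "X \<inter> S = X" "X \<inter> T = {}" using X dis by auto
  moreover have "X \<subseteq> S \<union> T" using X by blast
  ultimately show ?thesis using fp_rank[of X] rk_empty[OF MB] rk_le_E[OF MA, of X] by simp
qed

lemma fp_rank_SY: "Y \<subseteq> T \<Longrightarrow> mrank (free_product S A T B) (S \<union> Y) = mrank A S + mrank B Y"
proof -
  assume Y: "Y \<subseteq> T"
  have fY: "finite Y" using Y m_fin[OF MB] finite_subset by blast
  have "(S \<union> Y) \<inter> S = S" "(S \<union> Y) \<inter> T = Y" using Y dis by auto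
  moreover have "S \<union> Y \<subseteq> S \<union> T" using Y by blast
  ultimately show ?thesis using fp_rank[of "S \<union> Y"] rk_le_card[OF MB fY] by simp
qed

lemma fp_sep: "sep (S \<union> T) (free_product S A T B) S"
  unfolding sep_def
proof (intro conjI allI impI)
  fix X Y assume X: "X \<subseteq> S" and Y: "Y \<subseteq> S \<union> T - S"
  have YT: "Y \<subseteq> T" using Y by blast
  have "(X \<union> Y) \<inter> S = X" "(X \<union> Y) \<inter> T = Y" using X YT dis by auto
  moreover have "X \<union> Y \<subseteq> S \<union> T" using X YT by blast
  ultimately have "mrank (free_product S A T B) (X \<union> Y) = min (mrank A X + card Y) (mrank A S + mrank B Y)"
    using fp_rank[of "X \<union> Y"] by simp
  then show "min (mrank (free_product S A T B) X + card Y) (mrank (free_product S A T B) (S \<union> Y))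
         \<le> mrank (free_product S A T B) (X \<union> Y)"
    using fp_rank_S[OF X] fp_rank_SY[OF YT] by simp
qed simp

lemma fp_restr: "restr (free_product S A T B) S = A"
proof (intro set_eqI iffI)
  fix X assume "X \<in> restr (free_product S A T B) S"
  then have "X \<in> free_product S A T B" "X \<subseteq> S" unfolding mem_restr by auto
  then show "X \<in> A" unfolding fp_mem by (metis inf.absorb_iff1)
next
  fix X assume X: "X \<in> A"
  have XS: "X \<subseteq> S" using m_sub[OF MA X] .
  have e: "X \<inter> S = X" "X \<inter> T = {}" using XS dis by auto
  have "card X \<le> mrank A S" using rk_ge[OF MA X XS] .
  then have "X \<in> free_product S A T B" unfolding fp_mem e using X XS by auto
  then show "X \<in> restr (free_product S A T B) S" unfolding mem_restr using XS by simp
qed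

lemma fp_contr: "contr (S \<union> T) (free_product S A T B) S = B"
proof (intro set_eqI)
  fix Y
  have e: "S \<union> T - S = T" using dis by blast
  show "Y \<in> contr (S \<union> T) (free_product S A T B) S \<longleftrightarrow> Y \<in> B"
  proof (cases "Y \<subseteq> T")
    case True
    have "mrank (free_product S A T B) (Y \<union> S) = mrank A S + mrank B Y"
      using fp_rank_SY[OF True] by (simp add: Un_commute)
    moreover have "mrank (free_product S A T B) S = mrank A S" using fp_rank_S[of S] by simp
    moreover have "Y \<in> B \<longleftrightarrow> mrank B Y = card Y" using indep_iff[OF MB True] .
    ultimately show ?thesis unfolding contr_def e using True by auto
  next
    case False
    then show ?thesis unfolding contr_def e using m_sub[OF MB] by blast
  qed
qed

end


context fixes E I assumes M: "matroid E I" begin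

lemma contr_empty: "contr E I {} = I"
proof (intro set_eqI iffI)
  fix Y assume "Y \<in> contr E I {}"
  then have "Y \<subseteq> E" "mrank I Y = card Y" unfolding contr_def using rk_empty[OF M] by auto
  then show "Y \<in> I" using indep_iff[OF M] by blast
next
  fix Y assume Y: "Y \<in> I"
  then have "Y \<subseteq> E" using m_sub[OF M] by blast
  moreover have "mrank I Y = card Y" using rk_indep[OF M Y] .
  ultimately show "Y \<in> contr E I {}" unfolding contr_def using rk_empty[OF M] by auto
qed

lemma finE: "X \<subseteq> E \<Longrightarrow> finite X"
  using m_fin[OF M] finite_subset by blast

lemma sep_inter:
  assumes s1: "sep E I S" and s2: "sep E I S'"
  shows "sep E I (S \<inter> S')"
  unfolding sep_def
proof (intro conjI allI impI)
  show "S \<inter> S' \<subseteq> E" using sepD2[OF s1] by blast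
  fix X Y assume X: "X \<subseteq> S \<inter> S'" and Y: "Y \<subseteq> E - S \<inter> S'"
  define Y1 where "Y1 = Y \<inter> S"
  define Y2 where "Y2 = Y - S"
  have fY1: "finite Y1" using finE Y unfolding Y1_def by blast
  have fY2: "finite Y2" using finE Y unfolding Y2_def by blast
  have Yeq: "Y = Y1 \<union> Y2" unfolding Y1_def Y2_def by blast
  have cY: "card Y = card Y1 + card Y2"
    unfolding Yeq by (rule card_Un_disjoint) (use fY1 fY2 in \<open>auto simp: Y1_def Y2_def\<close>)
  have A1: "X \<union> Y1 \<subseteq> S" using X unfolding Y1_def by blast
  have A2: "Y2 \<subseteq> E - S" using Y unfolding Y2_def by blast
  have h1: "min (mrank I (X \<union> Y1) + card Y2) (mrank I (S \<union> Y2)) \<le> mrank I ((X \<union> Y1) \<union> Y2)"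
    using sepD[OF s1 A1 A2] .
  have B1: "X \<subseteq> S'" using X by blast
  have B2: "Y1 \<subseteq> E - S'" using Y unfolding Y1_def by blast
  have h2: "min (mrank I X + card Y1) (mrank I (S' \<union> Y1)) \<le> mrank I (X \<union> Y1)"
    using sepD[OF s2 B1 B2] .
  have XY: "(X \<union> Y1) \<union> Y2 = X \<union> Y" using Yeq by blast
  have m1: "mrank I ((S \<inter> S') \<union> Y) \<le> mrank I (S \<union> Y2)"
    by (rule rk_mono[OF M]) (auto simp: Y2_def)
  have "mrank I ((S \<inter> S') \<union> Y) \<le> mrank I ((S' \<union> Y1) \<union> Y2)"
    by (rule rk_mono[OF M]) (use Yeq in blast)
  also have "\<dots> \<le> mrank I (S' \<union> Y1) + card Y2" using rk_union_card[OF M fY2] .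
  finally have m2: "mrank I ((S \<inter> S') \<union> Y) \<le> mrank I (S' \<union> Y1) + card Y2" .
  let ?R = "mrank I (X \<union> Y)"
  have h1': "mrank I (X \<union> Y1) + card Y2 \<le> ?R \<or> mrank I (S \<union> Y2) \<le> ?R"
    using h1 unfolding XY min_le_iff_disj .
  have h2': "mrank I X + card Y1 \<le> mrank I (X \<union> Y1) \<or> mrank I (S' \<union> Y1) \<le> mrank I (X \<union> Y1)"
    using h2 unfolding min_le_iff_disj .
  have "mrank I X + card Y \<le> ?R \<or> mrank I ((S \<inter> S') \<union> Y) \<le> ?R"
  proof (cases "mrank I (S \<union> Y2) \<le> ?R")
    case True then show ?thesis using m1 by linarith
  next
    case False
    then have c: "mrank I (X \<union> Y1) + card Y2 \<le> ?R" using h1' by blast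
    show ?thesis
    proof (cases "mrank I X + card Y1 \<le> mrank I (X \<union> Y1)")
      case True then show ?thesis using c cY by linarith
    next
      case False
      then have "mrank I (S' \<union> Y1) \<le> mrank I (X \<union> Y1)" using h2' by blast
      then show ?thesis using c m2 by linarith
    qed
  qed
  then show "min (mrank I X + card Y) (mrank I (S \<inter> S' \<union> Y)) \<le> mrank I (X \<union> Y)"
    unfolding min_le_iff_disj .
qed

lemma sep_union:
  assumes s1: "sep E I S" and s2: "sep E I S'"
  shows "sep E I (S \<union> S')"
  unfolding sep_def
proof (intro conjI allI impI)
  show "S \<union> S' \<subseteq> E" using sepD2[OF s1] sepD2[OF s2] by blast
  fix X Y assume X: "X \<subseteq> S \<union> S'" and Y: "Y \<subseteq> E - (S \<union> S')"
  have XE: "X \<subseteq> E" using X sepD2[OF s1] sepD2[OF s2] by blast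
  let ?R = "mrank I (X \<union> Y)"
  have fX1: "finite (X - S)" using finE XE by blast
  have fX1': "finite (X - S')" using finE XE by blast
  have fY: "finite Y" using finE Y by blast
  have A1: "X \<inter> S \<subseteq> S" by blast
  have A2: "(X - S) \<union> Y \<subseteq> E - S" using XE Y by blast
  have h1: "min (mrank I (X \<inter> S) + card ((X - S) \<union> Y)) (mrank I (S \<union> ((X - S) \<union> Y))) \<le> mrank I ((X \<inter> S) \<union> ((X - S) \<union> Y))"
    using sepD[OF s1 A1 A2] .
  have B1: "X \<inter> S' \<subseteq> S'" by blast
  have B2: "(X - S') \<union> Y \<subseteq> E - S'" using XE Y by blast
  have h2: "min (mrank I (X \<inter> S') + card ((X - S') \<union> Y)) (mrank I (S' \<union> ((X - S') \<union> Y))) \<le> mrank I ((X \<inter> S') \<union> ((X - S') \<union> Y))"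
    using sepD[OF s2 B1 B2] .
  have e1: "(X \<inter> S) \<union> ((X - S) \<union> Y) = X \<union> Y" by blast
  have e2: "(X \<inter> S') \<union> ((X - S') \<union> Y) = X \<union> Y" by blast
  have e3: "S \<union> ((X - S) \<union> Y) = S \<union> X \<union> Y" by blast
  have e4: "S' \<union> ((X - S') \<union> Y) = S' \<union> X \<union> Y" by blast
  have c1: "card ((X - S) \<union> Y) = card (X - S) + card Y"
    by (rule card_Un_disjoint) (use fX1 fY Y X in auto)
  have c2: "card ((X - S') \<union> Y) = card (X - S') + card Y"
    by (rule card_Un_disjoint) (use fX1' fY Y X in auto)
  have r1: "mrank I X \<le> mrank I (X \<inter> S) + card (X - S)"
    using rk_union_card[OF M fX1, of "X \<inter> S"] by (simp add: Int_Diff_Un)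
  have r2: "mrank I X \<le> mrank I (X \<inter> S') + card (X - S')"
    using rk_union_card[OF M fX1', of "X \<inter> S'"] by (simp add: Int_Diff_Un)
  have h1': "mrank I (X \<inter> S) + (card (X - S) + card Y) \<le> ?R \<or> mrank I (S \<union> X \<union> Y) \<le> ?R"
    using h1 unfolding e1 e3 c1 min_le_iff_disj .
  have h2': "mrank I (X \<inter> S') + (card (X - S') + card Y) \<le> ?R \<or> mrank I (S' \<union> X \<union> Y) \<le> ?R"
    using h2 unfolding e2 e4 c2 min_le_iff_disj .
  have sm: "mrank I ((S \<union> X \<union> Y) \<union> (S' \<union> X \<union> Y)) + mrank I ((S \<union> X \<union> Y) \<inter> (S' \<union> X \<union> Y))
      \<le> mrank I (S \<union> X \<union> Y) + mrank I (S' \<union> X \<union> Y)" using rk_submod[OF M] .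
  have u: "(S \<union> X \<union> Y) \<union> (S' \<union> X \<union> Y) = S \<union> S' \<union> Y" using X by blast
  have i: "mrank I (X \<union> Y) \<le> mrank I ((S \<union> X \<union> Y) \<inter> (S' \<union> X \<union> Y))"
    by (rule rk_mono[OF M]) blast
  have "mrank I X + card Y \<le> ?R \<or> mrank I (S \<union> S' \<union> Y) \<le> ?R"
  proof (cases "mrank I (X \<inter> S) + (card (X - S) + card Y) \<le> ?R")
    case True then show ?thesis using r1 by linarith
  next
    case F1: False
    show ?thesis
    proof (cases "mrank I (X \<inter> S') + (card (X - S') + card Y) \<le> ?R")
      case True then show ?thesis using r2 by linarith
    next
      case False
      then have "mrank I (S' \<union> X \<union> Y) \<le> ?R" "mrank I (S \<union> X \<union> Y) \<le> ?R" using h1' h2' F1 by blast+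
      moreover have "mrank I (S \<union> S' \<union> Y) + mrank I ((S \<union> X \<union> Y) \<inter> (S' \<union> X \<union> Y))
          \<le> mrank I (S \<union> X \<union> Y) + mrank I (S' \<union> X \<union> Y)" using sm unfolding u .
      ultimately have "mrank I (S \<union> S' \<union> Y) \<le> ?R" using i by linarith
      then show ?thesis by blast
    qed
  qed
  then show "min (mrank I X + card Y) (mrank I (S \<union> S' \<union> Y)) \<le> mrank I (X \<union> Y)"
    unfolding min_le_iff_disj .
qed

lemma sep_restr_sub:
  assumes s: "sep E I S1" and sub: "S1 \<subseteq> S" and SE: "S \<subseteq> E"
  shows "sep S (restr I S) S1"
  unfolding sep_def
proof (intro conjI allI impI)
  show "S1 \<subseteq> S" using sub .
  fix X Y assume X: "X \<subseteq> S1" and Y: "Y \<subseteq> S - S1"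
  have Y': "Y \<subseteq> E - S1" using Y SE by blast
  have "X \<subseteq> S" "S1 \<union> Y \<subseteq> S" "X \<union> Y \<subseteq> S" using X Y sub by auto
  then show "min (mrank (restr I S) X + card Y) (mrank (restr I S) (S1 \<union> Y)) \<le> mrank (restr I S) (X \<union> Y)"
    using sepD[OF s X Y'] by (simp add: rk_restr)
qed

lemma sep_trans:
  assumes s: "sep E I S" and s1: "sep S (restr I S) S1"
  shows "sep E I S1"
  unfolding sep_def
proof (intro conjI allI impI)
  have SE: "S \<subseteq> E" using sepD2[OF s] .
  have S1S: "S1 \<subseteq> S" using sepD2[OF s1] .
  show "S1 \<subseteq> E" using SE S1S by blast
  fix X Y assume X: "X \<subseteq> S1" and Y: "Y \<subseteq> E - S1"
  define Y1 where "Y1 = Y \<inter> S"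
  define Y2 where "Y2 = Y - S"
  have fY1: "finite Y1" using finE Y unfolding Y1_def by blast
  have fY2: "finite Y2" using finE Y unfolding Y2_def by blast
  have Yeq: "Y = Y1 \<union> Y2" unfolding Y1_def Y2_def by blast
  have cY: "card Y = card Y1 + card Y2"
    unfolding Yeq by (rule card_Un_disjoint) (use fY1 fY2 in \<open>auto simp: Y1_def Y2_def\<close>)
  have A1: "X \<union> Y1 \<subseteq> S" using X S1S unfolding Y1_def by blast
  have A2: "Y2 \<subseteq> E - S" using Y unfolding Y2_def by blast
  have h1: "min (mrank I (X \<union> Y1) + card Y2) (mrank I (S \<union> Y2)) \<le> mrank I ((X \<union> Y1) \<union> Y2)"
    using sepD[OF s A1 A2] .
  have B1: "X \<subseteq> S1" using X .
  have B2: "Y1 \<subseteq> S - S1" using Y unfolding Y1_def by blast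
  have h2r: "min (mrank (restr I S) X + card Y1) (mrank (restr I S) (S1 \<union> Y1)) \<le> mrank (restr I S) (X \<union> Y1)"
    using sepD[OF s1 B1 B2] .
  have "X \<subseteq> S" "S1 \<union> Y1 \<subseteq> S" "X \<union> Y1 \<subseteq> S" using X S1S unfolding Y1_def by auto
  then have h2: "min (mrank I X + card Y1) (mrank I (S1 \<union> Y1)) \<le> mrank I (X \<union> Y1)"
    using h2r by (simp add: rk_restr)
  have XY: "(X \<union> Y1) \<union> Y2 = X \<union> Y" using Yeq by blast
  have m1: "mrank I (S1 \<union> Y) \<le> mrank I (S \<union> Y2)"
    by (rule rk_mono[OF M]) (use S1S in \<open>auto simp: Y1_def Y2_def\<close>)
  have "mrank I (S1 \<union> Y) = mrank I ((S1 \<union> Y1) \<union> Y2)" using Yeq by (simp add: Un_assoc)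
  also have "\<dots> \<le> mrank I (S1 \<union> Y1) + card Y2" using rk_union_card[OF M fY2] .
  finally have m2: "mrank I (S1 \<union> Y) \<le> mrank I (S1 \<union> Y1) + card Y2" .
  let ?R = "mrank I (X \<union> Y)"
  have h1': "mrank I (X \<union> Y1) + card Y2 \<le> ?R \<or> mrank I (S \<union> Y2) \<le> ?R"
    using h1 unfolding XY min_le_iff_disj .
  have h2': "mrank I X + card Y1 \<le> mrank I (X \<union> Y1) \<or> mrank I (S1 \<union> Y1) \<le> mrank I (X \<union> Y1)"
    using h2 unfolding min_le_iff_disj .
  have "mrank I X + card Y \<le> ?R \<or> mrank I (S1 \<union> Y) \<le> ?R"
  proof (cases "mrank I (S \<union> Y2) \<le> ?R")
    case True then show ?thesis using m1 by linarith
  next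
    case False
    then have c: "mrank I (X \<union> Y1) + card Y2 \<le> ?R" using h1' by blast
    show ?thesis
    proof (cases "mrank I X + card Y1 \<le> mrank I (X \<union> Y1)")
      case True then show ?thesis using c cY by linarith
    next
      case False
      then have "mrank I (S1 \<union> Y1) \<le> mrank I (X \<union> Y1)" using h2' by blast
      then show ?thesis using c m2 by linarith
    qed
  qed
  then show "min (mrank I X + card Y) (mrank I (S1 \<union> Y)) \<le> mrank I (X \<union> Y)"
    unfolding min_le_iff_disj .
qed

lemma comp_uniform1:
  assumes sP: "sep E I P" and sQ: "sep E I (E - P)" and ne: "P \<noteq> {}" and Y: "Y \<subseteq> E - P"
  shows "mrank I Y = min (card Y) (mrank I E)"
proof -
  have PE: "P \<subseteq> E" using sepD2[OF sP] .
  have fP: "finite P" using finE PE by blast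
  have cP: "1 \<le> card P" using fP ne by (simp add: Suc_le_eq card_gt_0_iff)
  have fY: "finite Y" using finE Y by blast
  have h1: "min (mrank I {} + card Y) (mrank I (P \<union> Y)) \<le> mrank I ({} \<union> Y)"
    using sepD[OF sP _ Y, of "{}"] by simp
  have P2: "P \<subseteq> E - (E - P)" using PE by blast
  have h2: "min (mrank I Y + card P) (mrank I ((E - P) \<union> P)) \<le> mrank I (Y \<union> P)"
    using sepD[OF sQ Y P2] .
  have e: "(E - P) \<union> P = E" using PE by blast
  have e2: "Y \<union> P = P \<union> Y" by blast
  have r0: "mrank I {} = 0" using rk_empty[OF M] .
  have a1: "mrank I Y \<le> card Y" using rk_le_card[OF M fY] .
  have a2: "mrank I Y \<le> mrank I E" using rk_le_E[OF M] .
  have a3: "mrank I (P \<union> Y) \<le> mrank I E" using rk_le_E[OF M] .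
  have h1': "card Y \<le> mrank I Y \<or> mrank I (P \<union> Y) \<le> mrank I Y"
    using h1 unfolding min_le_iff_disj r0 by simp
  have h2': "mrank I Y + card P \<le> mrank I (P \<union> Y) \<or> mrank I E \<le> mrank I (P \<union> Y)"
    using h2 unfolding min_le_iff_disj e e2 .
  show ?thesis
  proof (cases "card Y \<le> mrank I Y")
    case True then show ?thesis using a1 a2 by (simp add: min_def)
  next
    case False
    then have "mrank I (P \<union> Y) \<le> mrank I Y" using h1' by blast
    then have "mrank I E \<le> mrank I Y" using h2' cP by linarith
    then show ?thesis using a1 a2 False by (simp add: min_def)
  qed
qed

lemma comp_uniform:
  assumes sP: "sep E I P" and sQ: "sep E I (E - P)" and ne: "P \<noteq> {}" and ne2: "E - P \<noteq> {}"
    and Z: "Z \<subseteq> E"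
  shows "mrank I Z = min (card Z) (mrank I E)"
proof -
  have PE: "P \<subseteq> E" using sepD2[OF sP] .
  have EEP: "E - (E - P) = P" using PE by blast
  define X where "X = Z \<inter> P"
  define Y where "Y = Z - P"
  have fP: "finite P" using finE PE by blast
  have fX: "finite X" using finE Z unfolding X_def by blast
  have fY: "finite Y" using finE Z unfolding Y_def by blast
  have XP: "X \<subseteq> P" unfolding X_def by blast
  have cXP: "card X \<le> card P" using card_mono[OF fP XP] .
  have YQ: "Y \<subseteq> E - P" using Z unfolding Y_def by blast
  have XQ: "X \<subseteq> E - (E - P)" using XP EEP by simp
  have sQ': "sep E I (E - (E - P))" using sP EEP by simp
  have rY: "mrank I Y = min (card Y) (mrank I E)" using comp_uniform1[OF sP sQ ne YQ] .
  have rX: "mrank I X = min (card X) (mrank I E)" using comp_uniform1[OF sQ sQ' ne2 XQ] .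
  have ZXY: "Z = X \<union> Y" unfolding X_def Y_def by blast
  have cZ: "card Z = card X + card Y"
    unfolding ZXY by (rule card_Un_disjoint) (use fX fY in \<open>auto simp: X_def Y_def\<close>)
  have h1: "min (mrank I X + card Y) (mrank I (P \<union> Y)) \<le> mrank I (X \<union> Y)"
    using sepD[OF sP XP YQ] .
  have P2: "P \<subseteq> E - (E - P)" using PE by blast
  have h2: "min (mrank I Y + card P) (mrank I ((E - P) \<union> P)) \<le> mrank I (Y \<union> P)"
    using sepD[OF sQ YQ P2] .
  have e: "(E - P) \<union> P = E" using PE by blast
  have e2: "Y \<union> P = P \<union> Y" by blast
  have h1': "mrank I X + card Y \<le> mrank I Z \<or> mrank I (P \<union> Y) \<le> mrank I Z"
    using h1 unfolding min_le_iff_disj ZXY .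
  have h2': "mrank I Y + card P \<le> mrank I (P \<union> Y) \<or> mrank I E \<le> mrank I (P \<union> Y)"
    using h2 unfolding min_le_iff_disj e e2 .
  have u1: "mrank I Z \<le> card Z" using rk_le_card[OF M] finE Z by blast
  have u2: "mrank I Z \<le> mrank I E" using rk_le_E[OF M] .
  have rX': "mrank I X = card X \<or> mrank I X = mrank I E" using rX by (simp add: min_def)
  have rY': "mrank I Y = card Y \<or> mrank I Y = mrank I E" using rY by (simp add: min_def)
  have "card Z \<le> mrank I Z \<or> mrank I E \<le> mrank I Z"
    using h1' h2' rX' rY' cZ cXP by linarith
  then show ?thesis using u1 u2 by (auto simp: min_def)
qed

lemma uniform_sep_single:
  assumes U: "\<And>Z. Z \<subseteq> E \<Longrightarrow> mrank I Z = min (card Z) R" and e: "e \<in> E"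
  shows "sep E I {e}"
  unfolding sep_def
proof (intro conjI allI impI)
  show "{e} \<subseteq> E" using e by blast
  fix X Y assume X: "X \<subseteq> {e}" and Y: "Y \<subseteq> E - {e}"
  have fX: "finite X" using X finite_subset by blast
  have fY: "finite Y" using finE Y by blast
  have c: "card (X \<union> Y) = card X + card Y"
    by (rule card_Un_disjoint) (use fX fY X Y in auto)
  have r1: "mrank I (X \<union> Y) = min (card X + card Y) R" using U[of "X \<union> Y"] X Y e c by auto
  have eY: "{e} \<union> Y \<subseteq> E" using Y e by blast
  have r2: "mrank I ({e} \<union> Y) \<le> R" unfolding U[OF eY] by (rule min.cobounded2)
  have r3: "mrank I X \<le> card X" using rk_le_card[OF M fX] .
  show "min (mrank I X + card Y) (mrank I ({e} \<union> Y)) \<le> mrank I (X \<union> Y)"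
    unfolding r1 using r2 r3 by (simp add: min_def)
qed

end

lemma irr_iff:
  "irreducible_matroid E I \<longleftrightarrow> matroid E I \<and> E \<noteq> {} \<and> (\<forall>S. sep E I S \<longrightarrow> S = {} \<or> S = E)"
proof
  assume irr: "irreducible_matroid E I"
  then have M: "matroid E I" and ne: "E \<noteq> {}" and fac: "\<forall>S IS T IT. matroid S IS \<and> matroid T IT \<and> S \<inter> T = {} \<and> S \<union> T = E
        \<and> free_product S IS T IT = I \<longrightarrow> (S, IS) = (E, I) \<or> (T, IT) = (E, I)"
    unfolding irreducible_matroid_def by blast+
  show "matroid E I \<and> E \<noteq> {} \<and> (\<forall>S. sep E I S \<longrightarrow> S = {} \<or> S = E)"
  proof (intro conjI allI impI M ne)
    fix S assume sp: "sep E I S"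
    have SE: "S \<subseteq> E" using sepD2[OF sp] .
    have f: "matroid S (restr I S) \<and> matroid (E - S) (contr E I S) \<and> S \<inter> (E - S) = {} \<and> S \<union> (E - S) = E
        \<and> free_product S (restr I S) (E - S) (contr E I S) = I"
      using matroid_restr[OF M SE] matroid_contr[OF M SE] sep_decomp[OF M sp] SE by blast
    have "(S, restr I S) = (E, I) \<or> (E - S, contr E I S) = (E, I)"
      using fac f by blast
    then show "S = {} \<or> S = E" using SE by blast
  qed
next
  assume "matroid E I \<and> E \<noteq> {} \<and> (\<forall>S. sep E I S \<longrightarrow> S = {} \<or> S = E)"
  then have M: "matroid E I" and ne: "E \<noteq> {}" and H: "\<And>S. sep E I S \<Longrightarrow> S = {} \<or> S = E" by blast+
  show "irreducible_matroid E I"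
    unfolding irreducible_matroid_def
  proof (intro conjI allI impI M ne)
    fix S IS T IT
    assume a: "matroid S IS \<and> matroid T IT \<and> S \<inter> T = {} \<and> S \<union> T = E \<and> free_product S IS T IT = I"
    then have MS: "matroid S IS" and MT: "matroid T IT" and d: "S \<inter> T = {}" and u: "S \<union> T = E"
      and p: "free_product S IS T IT = I" by blast+
    have "sep (S \<union> T) (free_product S IS T IT) S" using fp_sep[OF MS MT d] .
    then have sp: "sep E I S" using u p by simp
    have r: "restr I S = IS" using fp_restr[OF MS MT d] p by simp
    have c: "contr E I S = IT" using fp_contr[OF MS MT d] p u by simp
    show "(S, IS) = (E, I) \<or> (T, IT) = (E, I)"
    proof (cases "S = {}")
      case True
      then have "T = E" using u by simp
      moreover have "IT = I" using c contr_empty[OF M] True by simp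
      ultimately show ?thesis by simp
    next
      case False
      then have "S = E" using H[OF sp] by blast
      moreover have "IS = I" using r restr_E[OF M] \<open>S = E\<close> by simp
      ultimately show ?thesis by simp
    qed
  qed
qed


lemma irr_uniform_single:
  assumes irr: "irreducible_matroid E I" and U: "\<And>Z. Z \<subseteq> E \<Longrightarrow> mrank I Z = min (card Z) R"
  shows "\<exists>e. E = {e}"
proof -
  have M: "matroid E I" and ne: "E \<noteq> {}" and H: "\<And>S. sep E I S \<Longrightarrow> S = {} \<or> S = E"
    using irr unfolding irr_iff by blast+
  obtain e where e: "e \<in> E" using ne by blast
  have "sep E I {e}" using uniform_sep_single[OF M U e] .
  then have "{e} = E" using H by blast
  then show ?thesis by blast
qed

definition iso :: "('a \<Rightarrow> 'b) \<Rightarrow> 'a set \<Rightarrow> 'a set set \<Rightarrow> 'b set \<Rightarrow> 'b set set \<Rightarrow> bool" where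
  "iso f E I E' I' \<longleftrightarrow> bij_betw f E E' \<and> (\<forall>X. X \<subseteq> E \<longrightarrow> (X \<in> I \<longleftrightarrow> f ` X \<in> I'))"

lemma matroid_iso_iff: "matroid_iso (E, I) (E', I') \<longleftrightarrow> (\<exists>f. iso f E I E' I')"
  unfolding matroid_iso_def iso_def by simp

lemma isoD: "iso f E I E' I' \<Longrightarrow> X \<subseteq> E \<Longrightarrow> X \<in> I \<longleftrightarrow> f ` X \<in> I'"
  unfolding iso_def by blast

lemma isoB: "iso f E I E' I' \<Longrightarrow> bij_betw f E E'"
  unfolding iso_def by blast

lemma crux:
  assumes M: "matroid E I" and s1: "sep E I S" and s2: "sep E I S'"
    and i1: "irreducible_matroid S (restr I S)" and i2: "irreducible_matroid S' (restr I S')"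
  shows "\<exists>\<sigma>. iso \<sigma> E I E I \<and> \<sigma> ` S = S'"
proof (cases "S = S'")
  case True then show ?thesis by (intro exI[of _ id]) (auto simp: iso_def)
next
  case neq: False
  have SE: "S \<subseteq> E" using sepD2[OF s1] .
  have S'E: "S' \<subseteq> E" using sepD2[OF s2] .
  have ne1: "S \<noteq> {}" using i1 unfolding irr_iff by blast
  have ne2: "S' \<noteq> {}" using i2 unfolding irr_iff by blast
  have H1: "\<And>S1. sep S (restr I S) S1 \<Longrightarrow> S1 = {} \<or> S1 = S" using i1 unfolding irr_iff by blast
  have H2: "\<And>S1. sep S' (restr I S') S1 \<Longrightarrow> S1 = {} \<or> S1 = S'" using i2 unfolding irr_iff by blast
  have "sep S (restr I S) (S \<inter> S')" using sep_restr_sub[OF M sep_inter[OF M s1 s2] _ SE] by blast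
  then have o: "S \<inter> S' = {} \<or> S \<inter> S' = S" using H1 by blast
  have "S \<inter> S' \<noteq> S"
  proof
    assume "S \<inter> S' = S"
    then have "S \<subseteq> S'" by blast
    then have "sep S' (restr I S') S" using sep_restr_sub[OF M s1 _ S'E] by blast
    then have "S = {} \<or> S = S'" using H2 by blast
    then show False using ne1 neq by blast
  qed
  then have d: "S \<inter> S' = {}" using o by blast
  define U where "U = S \<union> S'"
  have UE: "U \<subseteq> E" unfolding U_def using SE S'E by blast
  have sU: "sep E I U" using sep_union[OF M s1 s2] unfolding U_def .
  define L where "L = restr I U"
  have Lmat: "matroid U L" using matroid_restr[OF M UE] unfolding L_def .
  have sL1: "sep U L S" using sep_restr_sub[OF M s1 _ UE] unfolding L_def U_def by blast
  have US: "U - S = S'" using d unfolding U_def by blast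
  have sL2: "sep U L (U - S)" using sep_restr_sub[OF M s2 _ UE] US unfolding L_def U_def by auto
  have neU: "U - S \<noteq> {}" using US ne2 by simp
  have unif: "\<And>Z. Z \<subseteq> U \<Longrightarrow> mrank L Z = min (card Z) (mrank L U)"
    using comp_uniform[OF Lmat sL1 sL2 ne1 neU] .
  have rkL: "\<And>Z. Z \<subseteq> U \<Longrightarrow> mrank L Z = mrank I Z" using rk_restr unfolding L_def by blast
  have u1: "\<And>Z. Z \<subseteq> S \<Longrightarrow> mrank (restr I S) Z = min (card Z) (mrank L U)"
  proof -
    fix Z assume Z: "Z \<subseteq> S"
    then have ZU: "Z \<subseteq> U" unfolding U_def by blast
    show "mrank (restr I S) Z = min (card Z) (mrank L U)"
      using rk_restr[OF Z, of I] rkL[OF ZU] unif[OF ZU] by simp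
  qed
  have u2: "\<And>Z. Z \<subseteq> S' \<Longrightarrow> mrank (restr I S') Z = min (card Z) (mrank L U)"
  proof -
    fix Z assume Z: "Z \<subseteq> S'"
    then have ZU: "Z \<subseteq> U" unfolding U_def by blast
    show "mrank (restr I S') Z = min (card Z) (mrank L U)"
      using rk_restr[OF Z, of I] rkL[OF ZU] unif[OF ZU] by simp
  qed
  obtain s where s: "S = {s}" using irr_uniform_single[OF i1 u1] by blast
  obtain s' where s': "S' = {s'}" using irr_uniform_single[OF i2 u2] by blast
  have ss: "s \<noteq> s'" using d s s' by blast
  have sE: "s \<in> E" "s' \<in> E" using s s' SE S'E by auto
  have Ueq: "U = {s, s'}" unfolding U_def s s' by blast
  define \<sigma> where "\<sigma> x = (if x = s then s' else if x = s' then s else x)" for x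
  have inv: "\<And>x. \<sigma> (\<sigma> x) = x" unfolding \<sigma>_def by auto
  have inU: "\<And>x. \<sigma> x \<in> U \<longleftrightarrow> x \<in> U" unfolding \<sigma>_def Ueq by auto
  have outU: "\<And>x. x \<notin> U \<Longrightarrow> \<sigma> x = x" unfolding \<sigma>_def Ueq by auto
  have injs: "inj \<sigma>" by (metis inv injI)
  have inE: "\<And>x. x \<in> E \<Longrightarrow> \<sigma> x \<in> E" unfolding \<sigma>_def using sE by auto
  have bij: "bij_betw \<sigma> E E"
    by (rule bij_betw_byWitness[of E \<sigma> \<sigma>]) (use inv inE in auto)
  have indU: "\<And>Z. Z \<subseteq> U \<Longrightarrow> Z \<in> I \<longleftrightarrow> card Z \<le> mrank L U"
  proof -
    fix Z assume Z: "Z \<subseteq> U"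
    have "Z \<in> I \<longleftrightarrow> Z \<in> L" unfolding L_def mem_restr using Z by blast
    also have "\<dots> \<longleftrightarrow> mrank L Z = card Z" using indep_iff[OF Lmat Z] .
    also have "\<dots> \<longleftrightarrow> card Z \<le> mrank L U" unfolding unif[OF Z] by (simp add: min_def)
    finally show "Z \<in> I \<longleftrightarrow> card Z \<le> mrank L U" .
  qed
  have aut: "\<And>X. X \<subseteq> E \<Longrightarrow> X \<in> I \<longleftrightarrow> \<sigma> ` X \<in> I"
  proof -
    fix X assume X: "X \<subseteq> E"
    have sX: "\<sigma> ` X \<subseteq> E" using X inE by blast
    have e1: "\<sigma> ` X \<inter> U = \<sigma> ` (X \<inter> U)" using inU by blast
    have e2: "\<sigma> ` X - U = X - U"
    proof
      show "\<sigma> ` X - U \<subseteq> X - U" using inU outU by auto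
      show "X - U \<subseteq> \<sigma> ` X - U" using outU by (auto intro: rev_image_eqI[of _ _ _ \<sigma>] simp: image_iff)
    qed
    have c1: "card (\<sigma> ` X) = card X" using card_image[OF inj_on_subset[OF injs, of X]] by simp
    have c2: "card (\<sigma> ` (X \<inter> U)) = card (X \<inter> U)" using card_image[OF inj_on_subset[OF injs, of "X \<inter> U"]] by simp
    have XU: "X \<inter> U \<subseteq> U" by blast
    have sXU: "\<sigma> ` (X \<inter> U) \<subseteq> U" using inU by blast
    have "X \<in> I \<longleftrightarrow> X \<inter> U \<in> I \<and> card X \<le> mrank I (U \<union> (X - U))" using sep_char[OF M sU X] .
    also have "\<dots> \<longleftrightarrow> \<sigma> ` X \<inter> U \<in> I \<and> card (\<sigma> ` X) \<le> mrank I (U \<union> (\<sigma> ` X - U))"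
      unfolding e1 e2 c1 indU[OF XU] indU[OF sXU] c2 ..
    also have "\<dots> \<longleftrightarrow> \<sigma> ` X \<in> I" using sep_char[OF M sU sX] by simp
    finally show "X \<in> I \<longleftrightarrow> \<sigma> ` X \<in> I" .
  qed
  have "\<sigma> ` S = S'" unfolding s s' \<sigma>_def by simp
  then show ?thesis using bij aut unfolding iso_def by blast
qed


lemma iso_rank:
  assumes M: "matroid E I" and M': "matroid E' I'" and f: "iso f E I E' I'" and Z: "Z \<subseteq> E"
  shows "mrank I' (f ` Z) = mrank I Z"
proof -
  have inj: "inj_on f E" using isoB[OF f] unfolding bij_betw_def by blast
  obtain Y where Y: "Y \<in> I" "Y \<subseteq> Z" "card Y = mrank I Z" using rk_ex[OF M] by blast
  have YE: "Y \<subseteq> E" using Y Z by blast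
  have "f ` Y \<in> I'" using isoD[OF f YE] Y(1) by blast
  moreover have "f ` Y \<subseteq> f ` Z" using Y(2) by blast
  ultimately have "card (f ` Y) \<le> mrank I' (f ` Z)" using rk_ge[OF M'] by blast
  moreover have "card (f ` Y) = card Y" using card_image[OF inj_on_subset[OF inj YE]] .
  ultimately have ge: "mrank I Z \<le> mrank I' (f ` Z)" using Y(3) by simp
  obtain Y' where Y': "Y' \<in> I'" "Y' \<subseteq> f ` Z" "card Y' = mrank I' (f ` Z)" using rk_ex[OF M'] by blast
  define Y0 where "Y0 = {x \<in> Z. f x \<in> Y'}"
  have Y0Z: "Y0 \<subseteq> Z" unfolding Y0_def by blast
  have Y0E: "Y0 \<subseteq> E" using Y0Z Z by blast
  have fY0: "f ` Y0 = Y'" unfolding Y0_def using Y'(2) by blast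
  have "Y0 \<in> I" using isoD[OF f Y0E] fY0 Y'(1) by simp
  then have "card Y0 \<le> mrank I Z" using rk_ge[OF M _ Y0Z] by blast
  moreover have "card Y0 = card Y'" using card_image[OF inj_on_subset[OF inj Y0E]] fY0 by simp
  ultimately have "mrank I' (f ` Z) \<le> mrank I Z" using Y'(3) by simp
  then show ?thesis using ge by simp
qed

lemma iso_inv:
  assumes f: "iso f E I E' I'"
  shows "iso (inv_into E f) E' I' E I"
  unfolding iso_def
proof (intro conjI allI impI)
  have b: "bij_betw f E E'" using isoB[OF f] .
  show "bij_betw (inv_into E f) E' E" using bij_betw_inv_into[OF b] .
  fix X assume X: "X \<subseteq> E'"
  have s: "inv_into E f ` X \<subseteq> E" using X b by (metis bij_betw_def bij_betw_inv_into image_mono)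
  have c: "f ` (inv_into E f ` X) = X" using image_inv_into_cancel[of f E E' X] b X unfolding bij_betw_def by blast
  show "X \<in> I' \<longleftrightarrow> inv_into E f ` X \<in> I" using isoD[OF f s] c by simp
qed

lemma iso_comp:
  assumes f: "iso f E I E' I'" and g: "iso g E' I' E'' I''"
  shows "iso (g \<circ> f) E I E'' I''"
  unfolding iso_def
proof (intro conjI allI impI)
  show "bij_betw (g \<circ> f) E E''" using bij_betw_trans[OF isoB[OF f] isoB[OF g]] .
  fix X assume X: "X \<subseteq> E"
  have "f ` X \<subseteq> E'" using X isoB[OF f] unfolding bij_betw_def by blast
  then show "X \<in> I \<longleftrightarrow> (g \<circ> f) ` X \<in> I''" using isoD[OF f X] isoD[OF g] by (simp add: image_comp)
qed

lemma iso_id: "iso id E I E I"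
  unfolding iso_def by simp

lemma iso_sep:
  assumes M: "matroid E I" and M': "matroid E' I'" and f: "iso f E I E' I'" and s: "sep E I S"
  shows "sep E' I' (f ` S)"
  unfolding sep_def
proof (intro conjI allI impI)
  have b: "bij_betw f E E'" using isoB[OF f] .
  have inj: "inj_on f E" using b unfolding bij_betw_def by blast
  have fE: "f ` E = E'" using b unfolding bij_betw_def by blast
  have SE: "S \<subseteq> E" using sepD2[OF s] .
  show "f ` S \<subseteq> E'" using SE fE by blast
  fix X' Y' assume X': "X' \<subseteq> f ` S" and Y': "Y' \<subseteq> E' - f ` S"
  define X where "X = {x \<in> S. f x \<in> X'}"
  define Y where "Y = {x \<in> E - S. f x \<in> Y'}"
  have XS: "X \<subseteq> S" unfolding X_def by blast
  have YS: "Y \<subseteq> E - S" unfolding Y_def by blast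
  have fX: "f ` X = X'" unfolding X_def using X' by blast
  have fY: "f ` Y = Y'"
  proof
    show "f ` Y \<subseteq> Y'" unfolding Y_def by blast
    show "Y' \<subseteq> f ` Y"
    proof
      fix y assume y: "y \<in> Y'"
      then have "y \<in> E'" "y \<notin> f ` S" using Y' by auto
      then obtain x where "x \<in> E" "f x = y" using fE by blast
      then show "y \<in> f ` Y" unfolding Y_def using y \<open>y \<notin> f ` S\<close> by blast
    qed
  qed
  have XE: "X \<subseteq> E" using XS SE by blast
  have YE: "Y \<subseteq> E" using YS by blast
  have cY: "card Y' = card Y" using card_image[OF inj_on_subset[OF inj YE]] fY by simp
  have r1: "mrank I' X' = mrank I X" using iso_rank[OF M M' f XE] fX by simp
  have r2: "mrank I' (f ` S \<union> Y') = mrank I (S \<union> Y)" using iso_rank[OF M M' f, of "S \<union> Y"] SE YE fY by (simp add: image_Un)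
  have r3: "mrank I' (X' \<union> Y') = mrank I (X \<union> Y)" using iso_rank[OF M M' f, of "X \<union> Y"] XE YE fX fY by (simp add: image_Un)
  show "min (mrank I' X' + card Y') (mrank I' (f ` S \<union> Y')) \<le> mrank I' (X' \<union> Y')"
    unfolding r1 r2 r3 cY using sepD[OF s XS YS] .
qed

lemma iso_irr:
  assumes M: "matroid E I" and M': "matroid E' I'" and f: "iso f E I E' I'" and irr: "irreducible_matroid E I"
  shows "irreducible_matroid E' I'"
  unfolding irr_iff
proof (intro conjI allI impI M')
  have b: "bij_betw f E E'" using isoB[OF f] .
  have fE: "f ` E = E'" using b unfolding bij_betw_def by blast
  have ne: "E \<noteq> {}" and H: "\<And>S. sep E I S \<Longrightarrow> S = {} \<or> S = E" using irr unfolding irr_iff by blast+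
  show "E' \<noteq> {}" using ne fE by blast
  fix S' assume s: "sep E' I' S'"
  let ?g = "inv_into E f"
  have g: "iso ?g E' I' E I" using iso_inv[OF f] .
  have "sep E I (?g ` S')" using iso_sep[OF M' M g s] .
  then have o: "?g ` S' = {} \<or> ?g ` S' = E" using H by blast
  have S'E: "S' \<subseteq> E'" using sepD2[OF s] .
  have c: "f ` (?g ` S') = S'" using image_inv_into_cancel[of f E E' S'] fE S'E by blast
  show "S' = {} \<or> S' = E'" using o c fE by auto
qed

lemma iso_restr:
  assumes f: "iso f E I E' I'" and S: "S \<subseteq> E"
  shows "iso f S (restr I S) (f ` S) (restr I' (f ` S))"
  unfolding iso_def
proof (intro conjI allI impI)
  have b: "bij_betw f E E'" using isoB[OF f] .
  show "bij_betw f S (f ` S)" using bij_betw_subset[OF b S] by (simp add: bij_betw_def)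
  fix X assume X: "X \<subseteq> S"
  have XE: "X \<subseteq> E" using X S by blast
  show "X \<in> restr I S \<longleftrightarrow> f ` X \<in> restr I' (f ` S)"
    unfolding mem_restr using isoD[OF f XE] X by blast
qed

lemma iso_contr:
  assumes M: "matroid E I" and M': "matroid E' I'" and f: "iso f E I E' I'" and S: "S \<subseteq> E"
  shows "iso f (E - S) (contr E I S) (E' - f ` S) (contr E' I' (f ` S))"
  unfolding iso_def
proof (intro conjI allI impI)
  have b: "bij_betw f E E'" using isoB[OF f] .
  have inj: "inj_on f E" using b unfolding bij_betw_def by blast
  have fE: "f ` E = E'" using b unfolding bij_betw_def by blast
  have e: "f ` (E - S) = E' - f ` S" using inj_on_image_set_diff[OF inj _ S] fE by blast
  show "bij_betw f (E - S) (E' - f ` S)" using e inj_on_subset[OF inj] unfolding bij_betw_def by blast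
  fix Y assume Y: "Y \<subseteq> E - S"
  have YE: "Y \<subseteq> E" using Y by blast
  have fY: "f ` Y \<subseteq> E' - f ` S" using e Y by blast
  have c: "card (f ` Y) = card Y" using card_image[OF inj_on_subset[OF inj YE]] .
  have r1: "mrank I' (f ` Y \<union> f ` S) = mrank I (Y \<union> S)" using iso_rank[OF M M' f, of "Y \<union> S"] YE S by (simp add: image_Un)
  have r2: "mrank I' (f ` S) = mrank I S" using iso_rank[OF M M' f S] .
  show "Y \<in> contr E I S \<longleftrightarrow> f ` Y \<in> contr E' I' (f ` S)"
    unfolding contr_def using Y fY c r1 r2 by simp
qed

lemma fp_iso:
  assumes MA: "matroid S A" and MB: "matroid T B" and d: "S \<inter> T = {}"
    and MA': "matroid S' A'" and MB': "matroid T' B'" and d': "S' \<inter> T' = {}"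
    and f: "iso f S A S' A'" and g: "iso g T B T' B'"
  shows "iso (\<lambda>x. if x \<in> S then f x else g x) (S \<union> T) (free_product S A T B) (S' \<union> T') (free_product S' A' T' B')"
  unfolding iso_def
proof (intro conjI allI impI)
  let ?h = "\<lambda>x. if x \<in> S then f x else g x"
  have bf: "bij_betw f S S'" using isoB[OF f] .
  have bg: "bij_betw g T T'" using isoB[OF g] .
  have injf: "inj_on f S" and fS: "f ` S = S'" using bf unfolding bij_betw_def by blast+
  have injg: "inj_on g T" and gT: "g ` T = T'" using bg unfolding bij_betw_def by blast+
  have bh1: "bij_betw ?h S S'" using bf by (rule bij_betw_cong[THEN iffD1, rotated]) simp
  have bh2: "bij_betw ?h T T'" using bg d by (intro bij_betw_cong[THEN iffD1, OF _ bg]) auto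
  show "bij_betw ?h (S \<union> T) (S' \<union> T')" using bij_betw_combine[OF bh1 bh2 d'] .
  fix X assume X: "X \<subseteq> S \<union> T"
  have hX: "?h ` X = f ` (X \<inter> S) \<union> g ` (X \<inter> T)" using X d by auto
  have f1: "f ` (X \<inter> S) \<subseteq> S'" using fS by blast
  have g1: "g ` (X \<inter> T) \<subseteq> T'" using gT by blast
  have e1: "?h ` X \<inter> S' = f ` (X \<inter> S)" unfolding hX using f1 g1 d' by blast
  have e2: "?h ` X \<inter> T' = g ` (X \<inter> T)" unfolding hX using f1 g1 d' by blast
  have sub: "?h ` X \<subseteq> S' \<union> T'" unfolding hX using f1 g1 by blast
  have XS: "X \<inter> S \<subseteq> S" and XT: "X \<inter> T \<subseteq> T" by auto
  have c1: "card (f ` (X \<inter> S)) = card (X \<inter> S)" using card_image[OF inj_on_subset[OF injf XS]] .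
  have c2: "card (g ` (X \<inter> T)) = card (X \<inter> T)" using card_image[OF inj_on_subset[OF injg XT]] .
  have r1: "mrank A' S' = mrank A S" using iso_rank[OF MA MA' f, of S] fS by simp
  have r2: "mrank B' (g ` (X \<inter> T)) = mrank B (X \<inter> T)" using iso_rank[OF MB MB' g XT] .
  have i1: "X \<inter> S \<in> A \<longleftrightarrow> f ` (X \<inter> S) \<in> A'" using isoD[OF f XS] .
  show "X \<in> free_product S A T B \<longleftrightarrow> ?h ` X \<in> free_product S' A' T' B'"
    unfolding fp_mem[OF MA MB d] fp_mem[OF MA' MB' d'] e1 e2 c1 c2 r1 r2 i1 using X sub by blast
qed

lemma image_matroid:
  assumes M: "matroid E I" and inj: "inj_on f E"
  shows "matroid (f ` E) ((`) f ` I) \<and> iso f E I (f ` E) ((`) f ` I)"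
proof
  show "iso f E I (f ` E) ((`) f ` I)"
    unfolding iso_def
  proof (intro conjI allI impI)
    show "bij_betw f E (f ` E)" using inj by (simp add: bij_betw_def)
    fix X assume X: "X \<subseteq> E"
    show "X \<in> I \<longleftrightarrow> f ` X \<in> (`) f ` I"
    proof
      assume "f ` X \<in> (`) f ` I"
      then obtain Y where Y: "Y \<in> I" "f ` X = f ` Y" by blast
      have "Y \<subseteq> E" using m_sub[OF M Y(1)] .
      then have "X = Y" using inj_on_image_eq_iff[OF inj X] Y(2) by blast
      then show "X \<in> I" using Y by simp
    next
      assume "X \<in> I"
      then show "f ` X \<in> (`) f ` I" by (rule imageI)
    qed
  qed
  show "matroid (f ` E) ((`) f ` I)"
    unfolding matroid_def
  proof (intro conjI allI impI ballI)
    show "finite (f ` E)" using m_fin[OF M] by simp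
    have "f ` {} = {}" by simp
    then show "{} \<in> (`) f ` I" using m_empty[OF M] by (metis image_eqI)
  next
    fix X assume "X \<in> (`) f ` I"
    then obtain Z where Z: "Z \<in> I" "X = f ` Z" by blast
    then show "X \<subseteq> f ` E" using m_sub[OF M Z(1)] by blast
  next
    fix X Y assume a: "Y \<in> (`) f ` I \<and> X \<subseteq> Y"
    then obtain Y0 where Y0: "Y0 \<in> I" "Y = f ` Y0" by blast
    define X0 where "X0 = {x \<in> Y0. f x \<in> X}"
    have XY: "X \<subseteq> f ` Y0" using a Y0(2) by blast
    have "f ` X0 = X" unfolding X0_def using XY by blast
    moreover have "X0 \<subseteq> Y0" unfolding X0_def by blast
    then have "X0 \<in> I" using m_down[OF M Y0(1)] by blast
    ultimately show "X \<in> (`) f ` I" by (metis image_eqI)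
  next
    fix X Y assume a: "X \<in> (`) f ` I \<and> Y \<in> (`) f ` I \<and> card X < card Y"
    then obtain X0 Y0 where X0: "X0 \<in> I" "X = f ` X0" and Y0: "Y0 \<in> I" "Y = f ` Y0" by blast
    have X0E: "X0 \<subseteq> E" using m_sub[OF M X0(1)] .
    have Y0E: "Y0 \<subseteq> E" using m_sub[OF M Y0(1)] .
    have "card X = card X0" using X0(2) card_image[OF inj_on_subset[OF inj X0E]] by simp
    moreover have "card Y = card Y0" using Y0(2) card_image[OF inj_on_subset[OF inj Y0E]] by simp
    ultimately have "card X0 < card Y0" using a by simp
    then obtain y where y: "y \<in> Y0 - X0" "insert y X0 \<in> I" using m_aug[OF M X0(1) Y0(1)] by blast
    have yE: "y \<in> E" using y Y0E by blast
    have "f y \<notin> f ` X0" using inj_on_image_mem_iff[OF inj yE X0E] y(1) by blast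
    then have "f y \<notin> X" using X0(2) by simp
    moreover have "f y \<in> Y" using y Y0(2) by blast
    moreover have "insert (f y) X = f ` (insert y X0)" using X0(2) by simp
    moreover have "insert (f y) X \<in> (`) f ` I" using \<open>insert (f y) X = f ` (insert y X0)\<close> y(2) by (metis image_eqI)
    ultimately show "\<exists>y\<in>Y - X. insert y X \<in> (`) f ` I" by blast
  qed
qed


definition shiftm :: "nat \<Rightarrow> nat set set \<Rightarrow> nat set set" where
  "shiftm k B = (`) (\<lambda>x. x + k) ` B"

definition Phi :: "nat \<Rightarrow> nat \<Rightarrow> (nat set \<times> nat set set) \<Rightarrow> (nat set \<times> nat set set) \<Rightarrow> (nat set \<times> nat set set)" where
  "Phi n k a b = ({0..<n}, free_product {0..<k} (snd a) {k..<n} (shiftm k (snd b)))"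

definition Mat :: "nat \<Rightarrow> (nat set \<times> nat set set) set" where
  "Mat n = {(E, I). E = {0..<n} \<and> matroid E I}"

definition Irr :: "nat \<Rightarrow> (nat set \<times> nat set set) set" where
  "Irr n = {(E, I). E = {0..<n} \<and> irreducible_matroid E I}"

lemma irr_matroid: "irreducible_matroid E I \<Longrightarrow> matroid E I"
  unfolding irreducible_matroid_def by blast

lemma shift_iso:
  assumes M: "matroid {0..<m} B"
  shows "matroid {k..<k+m} (shiftm k B) \<and> iso (\<lambda>x. x + k) {0..<m} B {k..<k+m} (shiftm k B)"
proof -
  have inj: "inj_on (\<lambda>x. x + k) {0..<m}" by (simp add: inj_on_def)
  have e: "(\<lambda>x. x + k) ` {0..<m} = {k..<k+m}" by (simp add: add.commute)
  show ?thesis using image_matroid[OF M inj] unfolding e shiftm_def .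
qed

lemma sep_E: "sep E I E"
  unfolding sep_def by auto

lemma Phi_props:
  assumes MA: "matroid {0..<k} A" and MB: "matroid {0..<n-k} B" and kn: "k \<le> n"
  shows "matroid {0..<n} (snd (Phi n k (E1, A) (E2, B)))"
    and "mrank (snd (Phi n k (E1, A) (E2, B))) {0..<n} = mrank A {0..<k} + mrank B {0..<n-k}"
    and "sep {0..<n} (snd (Phi n k (E1, A) (E2, B))) {0..<k}"
    and "restr (snd (Phi n k (E1, A) (E2, B))) {0..<k} = A"
    and "contr {0..<n} (snd (Phi n k (E1, A) (E2, B))) {0..<k} = shiftm k B"
proof -
  have sh: "matroid {k..<n} (shiftm k B)" and shi: "iso (\<lambda>x. x + k) {0..<n-k} B {k..<n} (shiftm k B)"
    using shift_iso[OF MB, of k] kn by auto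
  have d: "{0..<k} \<inter> {k..<n} = {}" by auto
  have u: "{0..<k} \<union> {k..<n} = {0..<n}" using kn by auto
  have P: "snd (Phi n k (E1, A) (E2, B)) = free_product {0..<k} A {k..<n} (shiftm k B)"
    unfolding Phi_def by simp
  show "matroid {0..<n} (snd (Phi n k (E1, A) (E2, B)))"
    unfolding P using fp_matroid[OF MA sh d] u by simp
  show "sep {0..<n} (snd (Phi n k (E1, A) (E2, B))) {0..<k}"
    unfolding P using fp_sep[OF MA sh d] u by simp
  show "restr (snd (Phi n k (E1, A) (E2, B))) {0..<k} = A"
    unfolding P using fp_restr[OF MA sh d] .
  show "contr {0..<n} (snd (Phi n k (E1, A) (E2, B))) {0..<k} = shiftm k B"
    unfolding P using fp_contr[OF MA sh d] u by simp
  have r: "mrank (free_product {0..<k} A {k..<n} (shiftm k B)) ({0..<k} \<union> {k..<n}) = mrank A {0..<k} + mrank (shiftm k B) {k..<n}"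
    using fp_rank_SY[OF MA sh d, of "{k..<n}"] by simp
  have r2: "mrank (shiftm k B) {k..<n} = mrank B {0..<n-k}"
    using iso_rank[OF MB sh shi, of "{0..<n-k}"] kn by simp
  show "mrank (snd (Phi n k (E1, A) (E2, B))) {0..<n} = mrank A {0..<k} + mrank B {0..<n-k}"
    unfolding P using r r2 u by simp
qed

lemma Phi_respect:
  assumes MA: "matroid {0..<k} A" and MB: "matroid {0..<n-k} B" and kn: "k \<le> n"
    and MA': "matroid {0..<k} A'" and MB': "matroid {0..<n-k} B'"
    and f: "iso f {0..<k} A {0..<k} A'" and g: "iso g {0..<n-k} B {0..<n-k} B'"
  shows "matroid_iso (Phi n k (E1, A) (E2, B)) (Phi n k (E1', A') (E2', B'))"
proof -
  have sh: "matroid {k..<n} (shiftm k B)" and shi: "iso (\<lambda>x. x + k) {0..<n-k} B {k..<n} (shiftm k B)"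
    using shift_iso[OF MB, of k] kn by auto
  have sh': "matroid {k..<n} (shiftm k B')" and shi': "iso (\<lambda>x. x + k) {0..<n-k} B' {k..<n} (shiftm k B')"
    using shift_iso[OF MB', of k] kn by auto
  have g2: "iso ((\<lambda>x. x + k) \<circ> g \<circ> inv_into {0..<n-k} (\<lambda>x. x + k)) {k..<n} (shiftm k B) {k..<n} (shiftm k B')"
    using iso_comp[OF iso_comp[OF iso_inv[OF shi] g] shi'] by (simp add: comp_assoc)
  have d: "{0..<k} \<inter> {k..<n} = {}" by auto
  have u: "{0..<k} \<union> {k..<n} = {0..<n}" using kn by auto
  show ?thesis
    unfolding Phi_def snd_conv matroid_iso_iff using fp_iso[OF MA sh d MA' sh' d f g2] u by auto
qed

lemma Phi_reflect:
  assumes IA: "irreducible_matroid {0..<k} A" and MB: "matroid {0..<n-k} B" and kn: "k \<le> n"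
    and IA': "irreducible_matroid {0..<k'} A'" and MB': "matroid {0..<n-k'} B'" and kn': "k' \<le> n"
    and h0: "matroid_iso (Phi n k (E1, A) (E2, B)) (Phi n k' (E1', A') (E2', B'))"
  shows "k = k' \<and> matroid_iso ({0..<k}, A) ({0..<k'}, A') \<and> matroid_iso ({0..<n-k}, B) ({0..<n-k'}, B')"
proof -
  have MA: "matroid {0..<k} A" using irr_matroid[OF IA] .
  have MA': "matroid {0..<k'} A'" using irr_matroid[OF IA'] .
  define K1 where "K1 = snd (Phi n k (E1, A) (E2, B))"
  define K2 where "K2 = snd (Phi n k' (E1', A') (E2', B'))"
  let ?E = "{0..<n::nat}"
  note P1 = Phi_props[OF MA MB kn, of E1 E2, folded K1_def]
  note P2 = Phi_props[OF MA' MB' kn', of E1' E2', folded K2_def]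
  obtain h where h: "iso h ?E K1 ?E K2" using h0 unfolding K1_def K2_def Phi_def matroid_iso_iff by auto
  have M1: "matroid ?E K1" using P1(1) .
  have M2: "matroid ?E K2" using P2(1) .
  let ?g = "inv_into ?E h"
  have g: "iso ?g ?E K2 ?E K1" using iso_inv[OF h] .
  have hb: "bij_betw h ?E ?E" using isoB[OF h] .
  have S2E: "{0..<k'} \<subseteq> ?E" using kn' by auto
  have S1E: "{0..<k} \<subseteq> ?E" using kn by auto
  define S1' where "S1' = ?g ` {0..<k'}"
  have S1'E: "S1' \<subseteq> ?E" unfolding S1'_def using bij_betw_inv_into[OF hb] S2E unfolding bij_betw_def by blast
  have hS1': "h ` S1' = {0..<k'}" unfolding S1'_def using image_inv_into_cancel[of h ?E ?E "{0..<k'}"] hb S2E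
    unfolding bij_betw_def by blast
  have sep1': "sep ?E K1 S1'" unfolding S1'_def using iso_sep[OF M2 M1 g P2(3)] .
  have gi: "iso ?g {0..<k'} (restr K2 {0..<k'}) S1' (restr K1 S1')"
    unfolding S1'_def using iso_restr[OF g S2E] .
  have MR1': "matroid S1' (restr K1 S1')" using matroid_restr[OF M1 S1'E] .
  have irr1': "irreducible_matroid S1' (restr K1 S1')"
    using iso_irr[OF _ MR1' gi] P2(4) IA' MA' by simp
  have irr1: "irreducible_matroid {0..<k} (restr K1 {0..<k})" using P1(4) IA by simp
  obtain \<sigma> where \<sigma>: "iso \<sigma> ?E K1 ?E K1" "\<sigma> ` {0..<k} = S1'"
    using crux[OF M1 P1(3) sep1' irr1 irr1'] by blast
  have i1: "iso \<sigma> {0..<k} (restr K1 {0..<k}) S1' (restr K1 S1')" using iso_restr[OF \<sigma>(1) S1E] \<sigma>(2) by simp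
  have i2: "iso h S1' (restr K1 S1') {0..<k'} (restr K2 {0..<k'})" using iso_restr[OF h S1'E] hS1' by simp
  have iA: "iso (h \<circ> \<sigma>) {0..<k} A {0..<k'} A'" using iso_comp[OF i1 i2] P1(4) P2(4) by simp
  have kk: "k = k'" using bij_betw_same_card[OF isoB[OF iA]] by simp
  have j1: "iso \<sigma> (?E - {0..<k}) (contr ?E K1 {0..<k}) (?E - S1') (contr ?E K1 S1')"
    using iso_contr[OF M1 M1 \<sigma>(1) S1E] \<sigma>(2) by simp
  have j2: "iso h (?E - S1') (contr ?E K1 S1') (?E - {0..<k'}) (contr ?E K2 {0..<k'})"
    using iso_contr[OF M1 M2 h S1'E] hS1' by simp
  have eT: "?E - {0..<k} = {k..<n}" by auto
  have eT': "?E - {0..<k'} = {k'..<n}" by auto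
  have iC: "iso (h \<circ> \<sigma>) {k..<n} (shiftm k B) {k..<n} (shiftm k B')"
    using iso_comp[OF j1 j2] P1(5) P2(5) eT eT' kk by simp
  have shi: "iso (\<lambda>x. x + k) {0..<n-k} B {k..<n} (shiftm k B)"
    using shift_iso[OF MB, of k] kn by auto
  have shi': "iso (\<lambda>x. x + k) {0..<n-k} B' {k..<n} (shiftm k B')"
    using shift_iso[OF MB', of k] kn kk by auto
  have "iso (inv_into {0..<n-k} (\<lambda>x. x + k) \<circ> ((h \<circ> \<sigma>) \<circ> (\<lambda>x. x + k))) {0..<n-k} B {0..<n-k} B'"
    using iso_comp[OF iso_comp[OF shi iC] iso_inv[OF shi']] by (simp add: comp_assoc)
  then have "matroid_iso ({0..<n-k}, B) ({0..<n-k'}, B')" unfolding matroid_iso_iff kk by blast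
  moreover have "matroid_iso ({0..<k}, A) ({0..<k'}, A')" unfolding matroid_iso_iff using iA by blast
  ultimately show ?thesis using kk by blast
qed

lemma Phi_surj:
  assumes M: "matroid {0..<n} I" and n: "1 \<le> n"
  shows "\<exists>k A B. 1 \<le> k \<and> k \<le> n \<and> irreducible_matroid {0..<k} A \<and> matroid {0..<n-k} B
     \<and> matroid_iso ({0..<n}, I) (Phi n k ({0..<k}, A) ({0..<n-k}, B))"
proof -
  let ?E = "{0..<n::nat}"
  let ?P = "\<lambda>m. \<exists>S. sep ?E I S \<and> S \<noteq> {} \<and> card S = m"
  have ex: "?P n" using sep_E[of ?E I] n by force
  define m where "m = (LEAST m. ?P m)"
  have Pm: "?P m" unfolding m_def using LeastI_ex[of ?P] ex by blast
  have minm: "\<And>m'. ?P m' \<Longrightarrow> m \<le> m'" unfolding m_def by (rule Least_le)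
  obtain S where S: "sep ?E I S" "S \<noteq> {}" "card S = m" using Pm by blast
  have SE: "S \<subseteq> ?E" using sepD2[OF S(1)] .
  have fS: "finite S" using SE finite_subset by blast
  have irrS: "irreducible_matroid S (restr I S)"
    unfolding irr_iff
  proof (intro conjI allI impI)
    show "matroid S (restr I S)" using matroid_restr[OF M SE] .
    show "S \<noteq> {}" using S(2) .
    fix S1 assume s1: "sep S (restr I S) S1"
    have "sep ?E I S1" using sep_trans[OF M S(1) s1] .
    moreover have S1S: "S1 \<subseteq> S" using sepD2[OF s1] .
    ultimately have "S1 \<noteq> {} \<Longrightarrow> card S \<le> card S1" using minm S(3) by blast
    then show "S1 = {} \<or> S1 = S" using card_subset_eq[OF fS S1S] card_mono[OF fS S1S] by force
  qed
  define k where "k = card S"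
  have k1: "1 \<le> k" unfolding k_def using S(2) fS by (simp add: Suc_le_eq card_gt_0_iff)
  have kn: "k \<le> n" unfolding k_def using card_mono[OF _ SE] by simp
  have cES: "card (?E - S) = n - k" unfolding k_def using card_Diff_subset[OF fS SE] by simp
  have ck: "card S = card {0..<k}" unfolding k_def by simp
  obtain p1 where p1: "bij_betw p1 S {0..<k}" using finite_same_card_bij[OF fS finite_atLeastLessThan ck] by blast
  have ck2: "card (?E - S) = card {k..<n}" using cES by simp
  obtain p2 where p2: "bij_betw p2 (?E - S) {k..<n}" using finite_same_card_bij[OF _ finite_atLeastLessThan ck2] by blast
  have inj1: "inj_on p1 S" and im1: "p1 ` S = {0..<k}" using p1 unfolding bij_betw_def by blast+
  have inj2: "inj_on p2 (?E - S)" and im2: "p2 ` (?E - S) = {k..<n}" using p2 unfolding bij_betw_def by blast+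
  have MR: "matroid S (restr I S)" using matroid_restr[OF M SE] .
  have MC: "matroid (?E - S) (contr ?E I S)" using matroid_contr[OF M SE] .
  define A where "A = (`) p1 ` restr I S"
  define C where "C = (`) p2 ` contr ?E I S"
  have MA: "matroid {0..<k} A" and iA: "iso p1 S (restr I S) {0..<k} A"
    using image_matroid[OF MR inj1] unfolding im1 A_def by auto
  have MCC: "matroid {k..<n} C" and iC: "iso p2 (?E - S) (contr ?E I S) {k..<n} C"
    using image_matroid[OF MC inj2] unfolding im2 C_def by auto
  define B where "B = (`) (\<lambda>x. x - k) ` C"
  have injm: "inj_on (\<lambda>x. x - k) {k..<n}" by (auto simp: inj_on_def)
  have imm: "(\<lambda>x. x - k) ` {k..<n} = {0..<n-k}"
    using image_minus_const_atLeastLessThan_nat[of k k n] kn by auto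
  have MB: "matroid {0..<n-k} B" using image_matroid[OF MCC injm] unfolding imm B_def by blast
  have shB: "shiftm k B = C"
  proof -
    have "\<And>Z. Z \<in> C \<Longrightarrow> (\<lambda>x. x + k) ` (\<lambda>x. x - k) ` Z = Z"
    proof -
      fix Z assume "Z \<in> C"
      then have "Z \<subseteq> {k..<n}" using m_sub[OF MCC] by blast
      then show "(\<lambda>x. x + k) ` (\<lambda>x. x - k) ` Z = Z" by (force simp: image_image)
    qed
    then show ?thesis unfolding shiftm_def B_def image_image by simp
  qed
  have IA: "irreducible_matroid {0..<k} A" using iso_irr[OF MR MA iA irrS] .
  have d: "S \<inter> (?E - S) = {}" by blast
  have d': "{0..<k} \<inter> {k..<n} = {}" by auto
  have iso: "iso (\<lambda>x. if x \<in> S then p1 x else p2 x) (S \<union> (?E - S)) (free_product S (restr I S) (?E - S) (contr ?E I S))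
     ({0..<k} \<union> {k..<n}) (free_product {0..<k} A {k..<n} C)"
    using fp_iso[OF MR MC d MA MCC d' iA iC] .
  have u1: "S \<union> (?E - S) = ?E" using SE by blast
  have u2: "{0..<k} \<union> {k..<n} = ?E" using kn by auto
  have "matroid_iso ({0..<n}, I) (Phi n k ({0..<k}, A) ({0..<n-k}, B))"
    unfolding Phi_def snd_conv shB matroid_iso_iff using iso sep_decomp[OF M S(1)] u1 u2 by auto
  then show ?thesis using k1 kn IA MB by blast
qed


definition cls :: "(nat set \<times> nat set set) \<Rightarrow> (nat set \<times> nat set set) set" where
  "cls x = iso_rel `` {x}"

lemma miso_refl: "matroid_iso x x"
  unfolding matroid_iso_def by (intro exI[of _ id]) simp

lemma miso_sym: "matroid_iso x y \<Longrightarrow> matroid_iso y x"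
proof -
  assume "matroid_iso x y"
  then obtain f where "iso f (fst x) (snd x) (fst y) (snd y)"
    using matroid_iso_iff[of "fst x" "snd x" "fst y" "snd y"] by auto
  then have "iso (inv_into (fst x) f) (fst y) (snd y) (fst x) (snd x)" by (rule iso_inv)
  then show "matroid_iso y x" using matroid_iso_iff[of "fst y" "snd y" "fst x" "snd x"] by auto
qed

lemma miso_trans: "matroid_iso x y \<Longrightarrow> matroid_iso y z \<Longrightarrow> matroid_iso x z"
proof -
  assume "matroid_iso x y" "matroid_iso y z"
  then obtain f g where "iso f (fst x) (snd x) (fst y) (snd y)" "iso g (fst y) (snd y) (fst z) (snd z)"
    using matroid_iso_iff[of "fst x" "snd x" "fst y" "snd y"] matroid_iso_iff[of "fst y" "snd y" "fst z" "snd z"] by auto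
  then have "iso (g \<circ> f) (fst x) (snd x) (fst z) (snd z)" by (rule iso_comp)
  then show "matroid_iso x z" using matroid_iso_iff[of "fst x" "snd x" "fst z" "snd z"] by auto
qed

lemma iso_rel_equiv: "equiv UNIV iso_rel"
  unfolding equiv_def refl_on_def sym_def trans_def iso_rel_def
  using miso_refl miso_sym miso_trans by auto

lemma cls_eq: "cls x = cls y \<longleftrightarrow> matroid_iso x y"
  unfolding cls_def using equiv_class_eq_iff[OF iso_rel_equiv, of x y] unfolding iso_rel_def by simp

lemma quot_image: "A // iso_rel = cls ` A"
  unfolding quotient_def cls_def by auto

lemma card_kernel:
  assumes "\<And>x y. x \<in> X \<Longrightarrow> y \<in> X \<Longrightarrow> F x = F y \<longleftrightarrow> G x = G y"
  shows "card (F ` X) = card (G ` X)"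
proof -
  define h where "h u = G (inv_into X F u)" for u
  have "G ` X = h ` (F ` X)"
  proof
    show "G ` X \<subseteq> h ` F ` X"
    proof
      fix v assume "v \<in> G ` X"
      then obtain x where x: "x \<in> X" "v = G x" by blast
      have "inv_into X F (F x) \<in> X" "F (inv_into X F (F x)) = F x"
        using x(1) by (auto intro: inv_into_into f_inv_into_f)
      then have "h (F x) = G x" unfolding h_def using assms x(1) by blast
      moreover have "F x \<in> F ` X" using x(1) by (rule imageI)
      ultimately show "v \<in> h ` F ` X" using x(2) by (metis image_eqI)
    qed
    show "h ` F ` X \<subseteq> G ` X" unfolding h_def by (auto intro: inv_into_into)
  qed
  moreover have "inj_on h (F ` X)"
  proof (rule inj_onI)
    fix u v assume u: "u \<in> F ` X" and v: "v \<in> F ` X" and e: "h u = h v"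
    have a: "inv_into X F u \<in> X" "F (inv_into X F u) = u" using u by (auto intro: inv_into_into f_inv_into_f)
    have b: "inv_into X F v \<in> X" "F (inv_into X F v) = v" using v by (auto intro: inv_into_into f_inv_into_f)
    have "F (inv_into X F u) = F (inv_into X F v)" using assms[OF a(1) b(1)] e unfolding h_def by blast
    then show "u = v" using a(2) b(2) by simp
  qed
  ultimately show ?thesis using card_image by metis
qed

lemma fin_Mat: "finite (Mat n)"
proof -
  have "Mat n \<subseteq> {{0..<n}} \<times> Pow (Pow {0..<n})" unfolding Mat_def using m_sub by fastforce
  then show ?thesis by (rule finite_subset) simp
qed

lemma Irr_Mat: "Irr n \<subseteq> Mat n"
  unfolding Irr_def Mat_def using irr_matroid by auto

lemma fin_Irr: "finite (Irr n)"
  using finite_subset[OF Irr_Mat fin_Mat] .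

lemma Mat_iff: "x \<in> Mat n \<longleftrightarrow> fst x = {0..<n} \<and> matroid (fst x) (snd x)"
  unfolding Mat_def by (cases x) auto

lemma Irr_iff: "x \<in> Irr n \<longleftrightarrow> fst x = {0..<n} \<and> irreducible_matroid (fst x) (snd x)"
  unfolding Irr_def by (cases x) auto

lemma Phi_iso_iff:
  assumes a: "a \<in> Irr k" and b: "b \<in> Mat (n - k)" and kn: "k \<le> n"
    and a': "a' \<in> Irr k'" and b': "b' \<in> Mat (n - k')" and kn': "k' \<le> n"
  shows "matroid_iso (Phi n k a b) (Phi n k' a' b') \<longleftrightarrow> k = k' \<and> matroid_iso a a' \<and> matroid_iso b b'"
proof -
  obtain A where A: "a = ({0..<k}, A)" "irreducible_matroid {0..<k} A" using a unfolding Irr_iff by (cases a) auto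
  obtain B where B: "b = ({0..<n-k}, B)" "matroid {0..<n-k} B" using b unfolding Mat_iff by (cases b) auto
  obtain A' where A': "a' = ({0..<k'}, A')" "irreducible_matroid {0..<k'} A'" using a' unfolding Irr_iff by (cases a') auto
  obtain B' where B': "b' = ({0..<n-k'}, B')" "matroid {0..<n-k'} B'" using b' unfolding Mat_iff by (cases b') auto
  show ?thesis
  proof
    assume "matroid_iso (Phi n k a b) (Phi n k' a' b')"
    then show "k = k' \<and> matroid_iso a a' \<and> matroid_iso b b'"
      using Phi_reflect[OF A(2) B(2) kn A'(2) B'(2) kn'] A(1) B(1) A'(1) B'(1) by simp
  next
    assume h: "k = k' \<and> matroid_iso a a' \<and> matroid_iso b b'"
    have kk: "k' = k" using h by simp
    have "matroid_iso a a'" using h by simp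
    then have "matroid_iso ({0..<k}, A) ({0..<k}, A')" unfolding A(1) A'(1) kk .
    then obtain f where f: "iso f {0..<k} A {0..<k} A'" unfolding matroid_iso_iff by blast
    have "matroid_iso b b'" using h by simp
    then have "matroid_iso ({0..<n-k}, B) ({0..<n-k}, B')" unfolding B(1) B'(1) kk .
    then obtain g where g: "iso g {0..<n-k} B {0..<n-k} B'" unfolding matroid_iso_iff by blast
    have "matroid_iso (Phi n k ({0..<k}, A) ({0..<n-k}, B)) (Phi n k ({0..<k}, A') ({0..<n-k}, B'))"
      using Phi_respect[OF irr_matroid[OF A(2)] B(2) kn _ _ f g] irr_matroid[OF A'(2)] B'(2) h by simp
    then show "matroid_iso (Phi n k a b) (Phi n k' a' b')" using A(1) B(1) A'(1) B'(1) h by simp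
  qed
qed

lemma Phi_Mat:
  assumes a: "a \<in> Irr k" and b: "b \<in> Mat (n - k)" and kn: "k \<le> n"
  shows "Phi n k a b \<in> Mat n"
proof -
  obtain A where A: "a = ({0..<k}, A)" "irreducible_matroid {0..<k} A" using a unfolding Irr_iff by (cases a) auto
  obtain B where B: "b = ({0..<n-k}, B)" "matroid {0..<n-k} B" using b unfolding Mat_iff by (cases b) auto
  show ?thesis using Phi_props(1)[OF irr_matroid[OF A(2)] B(2) kn] A(1) B(1) unfolding Mat_iff
    by (simp add: Phi_def)
qed

lemma count_main:
  fixes Q :: "nat set \<times> nat set set \<Rightarrow> bool" and W :: "'w set" and jj :: "'w \<Rightarrow> nat"
    and QA QB :: "'w \<Rightarrow> nat set \<times> nat set set \<Rightarrow> bool"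
  assumes n: "1 \<le> n" and fW: "finite W" and jW: "\<And>w. w \<in> W \<Longrightarrow> 1 \<le> jj w \<and> jj w \<le> n"
    and Qinv: "\<And>x y. x \<in> Mat n \<Longrightarrow> y \<in> Mat n \<Longrightarrow> matroid_iso x y \<Longrightarrow> Q x \<longleftrightarrow> Q y"
    and QAinv: "\<And>w x y. w \<in> W \<Longrightarrow> x \<in> Irr (jj w) \<Longrightarrow> y \<in> Irr (jj w) \<Longrightarrow> matroid_iso x y \<Longrightarrow> QA w x \<longleftrightarrow> QA w y"
    and QBinv: "\<And>w x y. w \<in> W \<Longrightarrow> x \<in> Mat (n - jj w) \<Longrightarrow> y \<in> Mat (n - jj w) \<Longrightarrow> matroid_iso x y \<Longrightarrow> QB w x \<longleftrightarrow> QB w y"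
    and cover: "\<And>k a b. 1 \<le> k \<Longrightarrow> k \<le> n \<Longrightarrow> a \<in> Irr k \<Longrightarrow> b \<in> Mat (n - k) \<Longrightarrow>
        Q (Phi n k a b) \<longleftrightarrow> (\<exists>w\<in>W. jj w = k \<and> QA w a \<and> QB w b)"
    and uniq: "\<And>w w' a b. w \<in> W \<Longrightarrow> w' \<in> W \<Longrightarrow> jj w = jj w' \<Longrightarrow> a \<in> Irr (jj w) \<Longrightarrow> b \<in> Mat (n - jj w) \<Longrightarrow>
        QA w a \<Longrightarrow> QB w b \<Longrightarrow> QA w' a \<Longrightarrow> QB w' b \<Longrightarrow> w = w'"
  shows "card (cls ` {K \<in> Mat n. Q K}) =
     (\<Sum>w\<in>W. card (cls ` {a \<in> Irr (jj w). QA w a}) * card (cls ` {b \<in> Mat (n - jj w). QB w b}))"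
proof -
  define X where "X w = {a \<in> Irr (jj w). QA w a} \<times> {b \<in> Mat (n - jj w). QB w b}" for w
  define F where "F w = (\<lambda>(a, b). cls (Phi n (jj w) a b))" for w
  define G where "G = (\<lambda>(a, b). (cls a, cls b))"
  have U: "cls ` {K \<in> Mat n. Q K} = (\<Union>w\<in>W. F w ` X w)"
  proof
    show "cls ` {K \<in> Mat n. Q K} \<subseteq> (\<Union>w\<in>W. F w ` X w)"
    proof
      fix c assume "c \<in> cls ` {K \<in> Mat n. Q K}"
      then obtain K where K: "K \<in> Mat n" "Q K" "c = cls K" by blast
      obtain I where KI: "K = ({0..<n}, I)" "matroid {0..<n} I" using K(1) unfolding Mat_iff by (cases K) auto
      obtain k A B where kAB: "1 \<le> k" "k \<le> n" "irreducible_matroid {0..<k} A" "matroid {0..<n-k} B"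
        "matroid_iso ({0..<n}, I) (Phi n k ({0..<k}, A) ({0..<n-k}, B))"
        using Phi_surj[OF KI(2) n] by blast
      let ?a = "({0..<k}, A)" and ?b = "({0..<n-k}, B)"
      have aI: "?a \<in> Irr k" using kAB(3) unfolding Irr_iff by simp
      have bM: "?b \<in> Mat (n - k)" using kAB(4) unfolding Mat_iff by simp
      have PM: "Phi n k ?a ?b \<in> Mat n" using Phi_Mat[OF aI bM kAB(2)] .
      have "Q (Phi n k ?a ?b)" using Qinv[OF K(1) PM] kAB(5) KI(1) K(2) by simp
      then obtain w where w: "w \<in> W" "jj w = k" "QA w ?a" "QB w ?b" using cover[OF kAB(1,2) aI bM] by blast
      have "(?a, ?b) \<in> X w" unfolding X_def using w aI bM by simp
      moreover have "c = F w (?a, ?b)" unfolding F_def using K(3) KI(1) kAB(5) w(2) cls_eq by simp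
      ultimately show "c \<in> (\<Union>w\<in>W. F w ` X w)" using w(1) by blast
    qed
    show "(\<Union>w\<in>W. F w ` X w) \<subseteq> cls ` {K \<in> Mat n. Q K}"
    proof
      fix c assume "c \<in> (\<Union>w\<in>W. F w ` X w)"
      then obtain w x where wx: "w \<in> W" "x \<in> X w" "c = F w x" by blast
      obtain a b where "x = (a, b)" by (cases x)
      then have w: "w \<in> W" "(a, b) \<in> X w" "c = F w (a, b)" using wx by auto
      have ab: "a \<in> Irr (jj w)" "QA w a" "b \<in> Mat (n - jj w)" "QB w b" using w(2) unfolding X_def by auto
      have j: "1 \<le> jj w" "jj w \<le> n" using jW[OF w(1)] by auto
      have "Phi n (jj w) a b \<in> Mat n" using Phi_Mat[OF ab(1) ab(3) j(2)] .
      moreover have "Q (Phi n (jj w) a b)" using cover[OF j ab(1) ab(3)] w(1) ab by blast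
      ultimately show "c \<in> cls ` {K \<in> Mat n. Q K}" using w(3) unfolding F_def by simp
    qed
  qed
  have D: "\<And>w w'. w \<in> W \<Longrightarrow> w' \<in> W \<Longrightarrow> w \<noteq> w' \<Longrightarrow> F w ` X w \<inter> F w' ` X w' = {}"
  proof (rule ccontr)
    fix w w' assume w: "w \<in> W" and w': "w' \<in> W" and ne: "w \<noteq> w'" and "F w ` X w \<inter> F w' ` X w' \<noteq> {}"
    then obtain c where "c \<in> F w ` X w" "c \<in> F w' ` X w'" by blast
    then obtain x y where xy: "x \<in> X w" "y \<in> X w'" "F w x = F w' y" by (metis imageE)
    obtain a b where xe: "x = (a, b)" by (cases x)
    obtain a' b' where ye: "y = (a', b')" by (cases y)
    have x: "(a, b) \<in> X w" and y: "(a', b') \<in> X w'" and e: "F w (a, b) = F w' (a', b')"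
      using xy xe ye by auto
    have ab: "a \<in> Irr (jj w)" "QA w a" "b \<in> Mat (n - jj w)" "QB w b" using x unfolding X_def by auto
    have ab': "a' \<in> Irr (jj w')" "QA w' a'" "b' \<in> Mat (n - jj w')" "QB w' b'" using y unfolding X_def by auto
    have "cls (Phi n (jj w) a b) = cls (Phi n (jj w') a' b')" using e unfolding F_def by simp
    then have "matroid_iso (Phi n (jj w) a b) (Phi n (jj w') a' b')" unfolding cls_eq .
    then have h: "jj w = jj w'" "matroid_iso a a'" "matroid_iso b b'"
      using Phi_iso_iff[OF ab(1) ab(3) _ ab'(1) ab'(3)] jW[OF w] jW[OF w'] by auto
    have "QA w' a" using QAinv[OF w', of a a'] ab(1) ab'(1) h ab'(2) by simp
    moreover have "QB w' b" using QBinv[OF w', of b b'] ab(3) ab'(3) h ab'(4) by simp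
    ultimately have "w = w'" using uniq[OF w w' h(1) ab(1) ab(3) ab(2) ab(4)] by blast
    then show False using ne by blast
  qed
  have C: "\<And>w. w \<in> W \<Longrightarrow> card (F w ` X w) = card (cls ` {a \<in> Irr (jj w). QA w a}) * card (cls ` {b \<in> Mat (n - jj w). QB w b})"
  proof -
    fix w assume w: "w \<in> W"
    have j: "jj w \<le> n" using jW[OF w] by simp
    have "card (F w ` X w) = card (G ` X w)"
    proof (rule card_kernel)
      fix x y assume x: "x \<in> X w" and y: "y \<in> X w"
      obtain a b where xab: "x = (a, b)" by (cases x)
      obtain a' b' where yab: "y = (a', b')" by (cases y)
      have ab: "a \<in> Irr (jj w)" "b \<in> Mat (n - jj w)" using x xab unfolding X_def by auto
      have ab': "a' \<in> Irr (jj w)" "b' \<in> Mat (n - jj w)" using y yab unfolding X_def by auto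
      show "F w x = F w y \<longleftrightarrow> G x = G y"
        unfolding xab yab F_def G_def using Phi_iso_iff[OF ab(1) ab(2) j ab'(1) ab'(2) j] cls_eq by simp
    qed
    moreover have "G ` X w = cls ` {a \<in> Irr (jj w). QA w a} \<times> cls ` {b \<in> Mat (n - jj w). QB w b}"
      unfolding G_def X_def by force
    ultimately show "card (F w ` X w) = card (cls ` {a \<in> Irr (jj w). QA w a}) * card (cls ` {b \<in> Mat (n - jj w). QB w b})"
      by (simp add: card_cartesian_product)
  qed
  have fin: "\<And>w. w \<in> W \<Longrightarrow> finite (F w ` X w)"
  proof -
    fix w
    have "finite (X w)" unfolding X_def using fin_Irr fin_Mat by simp
    then show "finite (F w ` X w)" by simp
  qed
  have "card (\<Union>w\<in>W. F w ` X w) = (\<Sum>w\<in>W. card (F w ` X w))"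
    by (rule card_UN_disjoint[OF fW]) (use fin D in auto)
  then show ?thesis unfolding U using C by simp
qed


lemma nc_eq: "num_classes n P = card (cls ` {K \<in> Mat n. P (fst K) (snd K)})"
proof -
  have "{(E, I). E = {0..<n} \<and> matroid E I \<and> P E I} = {K \<in> Mat n. P (fst K) (snd K)}"
    unfolding Mat_def by auto
  then show ?thesis unfolding num_classes_def quot_image by simp
qed

lemma m_count_eq: "m_count n = card (cls ` Mat n)"
  unfolding m_count_def nc_eq by simp

lemma i_count_eq: "i_count n = card (cls ` Irr n)"
proof -
  have "{K \<in> Mat n. irreducible_matroid (fst K) (snd K)} = Irr n"
    unfolding Mat_def Irr_def using irr_matroid by auto
  then show ?thesis unfolding i_count_def nc_eq by simp
qed

lemma m_count2_eq: "m_count2 r k = card (cls ` {K \<in> Mat (r + k). mrank (snd K) (fst K) = r})"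
  unfolding m_count2_def nc_eq by simp

lemma i_count2_eq: "i_count2 r k = card (cls ` {a \<in> Irr (r + k). mrank (snd a) (fst a) = r})"
proof -
  have "{K \<in> Mat (r + k). irreducible_matroid (fst K) (snd K) \<and> mrank (snd K) (fst K) = r}
      = {a \<in> Irr (r + k). mrank (snd a) (fst a) = r}"
    unfolding Mat_def Irr_def using irr_matroid by auto
  then show ?thesis unfolding i_count2_def nc_eq by simp
qed

lemma matroid_empty: "matroid {} I \<longleftrightarrow> I = {{}}"
  unfolding matroid_def by auto

lemma Mat0: "Mat 0 = {({}, {{}})}"
  unfolding Mat_def using matroid_empty by auto

lemma Irr0: "Irr 0 = {}"
  unfolding Irr_def irreducible_matroid_def by auto

lemma rank_empty_m: "mrank {{}} {} = 0"
  unfolding mrank_def by simp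

lemma m0: "m_count 0 = 1" unfolding m_count_eq Mat0 by simp
lemma i0: "i_count 0 = 0" unfolding i_count_eq Irr0 by simp
lemma m00: "m_count2 0 0 = 1"
proof -
  have "{K \<in> Mat (0 + 0). mrank (snd K) (fst K) = 0} = {({}, {{}})}" using Mat0 rank_empty_m by auto
  then show ?thesis unfolding m_count2_eq by simp
qed
lemma i00: "i_count2 0 0 = 0" unfolding i_count2_eq using Irr0 by simp

lemma rank_inv:
  assumes x: "x \<in> Mat m" and y: "y \<in> Mat m" and h: "matroid_iso x y"
  shows "mrank (snd x) (fst x) = mrank (snd y) (fst y)"
proof -
  obtain f where f: "iso f (fst x) (snd x) (fst y) (snd y)"
    using h matroid_iso_iff[of "fst x" "snd x" "fst y" "snd y"] by auto
  have Mx: "matroid (fst x) (snd x)" and My: "matroid (fst y) (snd y)" using x y unfolding Mat_iff by auto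
  have "f ` fst x = fst y" using isoB[OF f] unfolding bij_betw_def by blast
  then show ?thesis using iso_rank[OF Mx My f, of "fst x"] by simp
qed

lemma rec1:
  assumes n: "1 \<le> n"
  shows "m_count n = (\<Sum>j\<in>{1..n}. i_count j * m_count (n - j))"
proof -
  have "card (cls ` {K \<in> Mat n. True}) =
     (\<Sum>w\<in>{1..n}. card (cls ` {a \<in> Irr (id w). True}) * card (cls ` {b \<in> Mat (n - id w). True}))"
    by (rule count_main[OF n]) auto
  then show ?thesis unfolding m_count_eq i_count_eq by simp
qed

lemma rec2:
  assumes rk: "1 \<le> r + k"
  shows "m_count2 r k = (\<Sum>p\<in>({0..r} \<times> {0..k}) - {(0, 0)}. i_count2 (fst p) (snd p) * m_count2 (r - fst p) (k - snd p))"
proof -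
  let ?n = "r + k"
  let ?W = "({0..r} \<times> {0..k}) - {(0::nat, 0::nat)}"
  let ?Q = "\<lambda>K. mrank (snd K) (fst K) = r"
  let ?jj = "\<lambda>p::nat \<times> nat. fst p + snd p"
  let ?QA = "\<lambda>(p::nat \<times> nat) a. mrank (snd a) (fst a) = fst p"
  let ?QB = "\<lambda>(p::nat \<times> nat) b. mrank (snd b) (fst b) = r - fst p"
  have main: "card (cls ` {K \<in> Mat ?n. ?Q K}) =
     (\<Sum>w\<in>?W. card (cls ` {a \<in> Irr (?jj w). ?QA w a}) * card (cls ` {b \<in> Mat (?n - ?jj w). ?QB w b}))"
  proof (rule count_main[OF rk])
    show "finite ?W" by simp
  next
    fix w assume "w \<in> ?W"
    then show "1 \<le> ?jj w \<and> ?jj w \<le> ?n" by (cases w) auto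
  next
    fix x y assume "x \<in> Mat ?n" "y \<in> Mat ?n" "matroid_iso x y"
    then show "?Q x \<longleftrightarrow> ?Q y" using rank_inv by metis
  next
    fix w x y assume "w \<in> ?W" "x \<in> Irr (?jj w)" "y \<in> Irr (?jj w)" "matroid_iso x y"
    then have "x \<in> Mat (?jj w)" "y \<in> Mat (?jj w)" "matroid_iso x y" using Irr_Mat by blast+
    then have "mrank (snd x) (fst x) = mrank (snd y) (fst y)" by (rule rank_inv)
    then show "?QA w x \<longleftrightarrow> ?QA w y" by simp
  next
    fix w x y assume "w \<in> ?W" "x \<in> Mat (?n - ?jj w)" "y \<in> Mat (?n - ?jj w)" "matroid_iso x y"
    then have "mrank (snd x) (fst x) = mrank (snd y) (fst y)" by (intro rank_inv) blast+
    then show "?QB w x \<longleftrightarrow> ?QB w y" by simp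
  next
    fix j a b assume j: "1 \<le> j" "j \<le> ?n" and a: "a \<in> Irr j" and b: "b \<in> Mat (?n - j)"
    obtain A where A: "a = ({0..<j}, A)" "irreducible_matroid {0..<j} A" using a unfolding Irr_iff by (cases a) auto
    obtain B where B: "b = ({0..<?n-j}, B)" "matroid {0..<?n-j} B" using b unfolding Mat_iff by (cases b) auto
    have MA: "matroid {0..<j} A" using irr_matroid[OF A(2)] .
    have rP: "mrank (snd (Phi ?n j a b)) (fst (Phi ?n j a b)) = mrank A {0..<j} + mrank B {0..<?n-j}"
      using Phi_props(2)[OF MA B(2) j(2)] A(1) B(1) by (simp add: Phi_def)
    have ra: "mrank A {0..<j} \<le> j" using rk_le_card[OF MA, of "{0..<j}"] by simp
    have rb: "mrank B {0..<?n-j} \<le> ?n - j" using rk_le_card[OF B(2), of "{0..<?n-j}"] by simp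
    let ?ra = "mrank A {0..<j}" and ?rb = "mrank B {0..<?n-j}"
    show "?Q (Phi ?n j a b) \<longleftrightarrow> (\<exists>w\<in>?W. ?jj w = j \<and> ?QA w a \<and> ?QB w b)"
    proof
      assume "?Q (Phi ?n j a b)"
      then have s: "?ra + ?rb = r" using rP by simp
      have "(?ra, j - ?ra) \<in> ?W" using s ra rb j by auto
      moreover have "?jj (?ra, j - ?ra) = j" using ra by simp
      moreover have "?QA (?ra, j - ?ra) a" using A(1) by simp
      moreover have "?QB (?ra, j - ?ra) b" using B(1) s by simp
      ultimately show "\<exists>w\<in>?W. ?jj w = j \<and> ?QA w a \<and> ?QB w b" by blast
    next
      assume "\<exists>w\<in>?W. ?jj w = j \<and> ?QA w a \<and> ?QB w b"
      then obtain w where w: "w \<in> ?W" "?QA w a" "?QB w b" by blast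
      have "fst w \<le> r" using w(1) by (cases w) auto
      then show "?Q (Phi ?n j a b)" using rP w(2,3) A(1) B(1) by simp
    qed
  next
    fix w w' a b assume "w \<in> ?W" "w' \<in> ?W" "?jj w = ?jj w'" "?QA w a" "?QA w' a"
    then show "w = w'" by (cases w, cases w') auto
  qed
  have e: "\<And>p. p \<in> ?W \<Longrightarrow> card (cls ` {a \<in> Irr (?jj p). ?QA p a}) * card (cls ` {b \<in> Mat (?n - ?jj p). ?QB p b})
      = i_count2 (fst p) (snd p) * m_count2 (r - fst p) (k - snd p)"
  proof -
    fix p assume p: "p \<in> ?W"
    have "?n - ?jj p = (r - fst p) + (k - snd p)" using p by (cases p) auto
    then show "card (cls ` {a \<in> Irr (?jj p). ?QA p a}) * card (cls ` {b \<in> Mat (?n - ?jj p). ?QB p b})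
      = i_count2 (fst p) (snd p) * m_count2 (r - fst p) (k - snd p)"
      unfolding i_count2_eq m_count2_eq by (cases p) simp
  qed
  have "m_count2 r k = card (cls ` {K \<in> Mat ?n. ?Q K})" by (rule m_count2_eq)
  also have "\<dots> = (\<Sum>w\<in>?W. card (cls ` {a \<in> Irr (?jj w). ?QA w a}) * card (cls ` {b \<in> Mat (?n - ?jj w). ?QB w b}))"
    by (rule main)
  also have "\<dots> = (\<Sum>p\<in>?W. i_count2 (fst p) (snd p) * m_count2 (r - fst p) (k - snd p))"
    by (rule sum.cong[OF refl]) (rule e)
  finally show ?thesis .
qed


unbundle fps_syntax

lemma uni_part: "Abs_fps (\<lambda>n. of_nat (m_count n) :: rat) = inverse (1 - Abs_fps (\<lambda>n. of_nat (i_count n)))"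
proof -
  define Mf where "Mf = Abs_fps (\<lambda>n. of_nat (m_count n) :: rat)"
  define If where "If = Abs_fps (\<lambda>n. of_nat (i_count n) :: rat)"
  have "(1 - If) * Mf = 1"
  proof (rule fps_ext)
    fix n
    have e: "((1 - If) * Mf) $ n = of_nat (m_count n) - (\<Sum>i=0..n. of_nat (i_count i) * of_nat (m_count (n - i)))"
      by (simp add: left_diff_distrib fps_mult_nth Mf_def If_def)
    show "((1 - If) * Mf) $ n = (1::rat fps) $ n"
    proof (cases "n = 0")
      case True then show ?thesis using e m0 i0 by simp
    next
      case False
      then have n: "1 \<le> n" by simp
      have "(\<Sum>i=0..n. (of_nat (i_count i) :: rat) * of_nat (m_count (n - i)))
          = of_nat (i_count 0) * of_nat (m_count (n - 0)) + (\<Sum>i=Suc 0..n. of_nat (i_count i) * of_nat (m_count (n - i)))"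
        by (rule sum.atLeast_Suc_atMost) simp
      also have "\<dots> = of_nat (\<Sum>j\<in>{1..n}. i_count j * m_count (n - j))" using i0 by simp
      also have "\<dots> = of_nat (m_count n)" using rec1[OF n] by simp
      finally show ?thesis using e False by simp
    qed
  qed
  then have "inverse (1 - If) = Mf" by (rule fps_inverse_unique)
  then show ?thesis unfolding Mf_def If_def by simp
qed

lemma biv_nth: "biv c $ r $ k = of_nat (c r k)"
  unfolding biv_def by simp

lemma biv_part: "biv m_count2 = inverse (1 - biv i_count2)"
proof -
  define Bm where "Bm = biv m_count2"
  define Bi where "Bi = biv i_count2"
  have fg: "(1 - Bi) * Bm = 1"
  proof (rule fps_ext)
    fix r
    show "((1 - Bi) * Bm) $ r = (1::rat fps fps) $ r"
    proof (rule fps_ext)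
      fix k
      have e: "((1 - Bi) * Bm) $ r $ k = of_nat (m_count2 r k) - (\<Sum>i=0..r. \<Sum>j=0..k. of_nat (i_count2 i j) * of_nat (m_count2 (r - i) (k - j)))"
        by (simp add: left_diff_distrib fps_mult_nth fps_sum_nth Bm_def Bi_def biv_nth)
      have o: "(1::rat fps fps) $ r $ k = (if r = 0 \<and> k = 0 then 1 else 0)" by simp
      show "((1 - Bi) * Bm) $ r $ k = (1::rat fps fps) $ r $ k"
      proof (cases "r = 0 \<and> k = 0")
        case True then show ?thesis using e o m00 i00 by simp
      next
        case False
        then have rk: "1 \<le> r + k" by auto
        define f where "f p = i_count2 (fst p) (snd p) * m_count2 (r - fst p) (k - snd p)" for p
        have "(\<Sum>i=0..r. \<Sum>j=0..k. (of_nat (i_count2 i j) :: rat) * of_nat (m_count2 (r - i) (k - j)))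
            = (\<Sum>i=0..r. \<Sum>j=0..k. of_nat (f (i, j)))" unfolding f_def by simp
        also have "\<dots> = (\<Sum>p\<in>{0..r}\<times>{0..k}. of_nat (f p))" by (simp add: sum.cartesian_product)
        also have "\<dots> = of_nat (f (0, 0)) + (\<Sum>p\<in>{0..r}\<times>{0..k} - {(0, 0)}. of_nat (f p))"
          by (rule sum.remove) auto
        also have "\<dots> = of_nat (\<Sum>p\<in>{0..r}\<times>{0..k} - {(0, 0)}. f p)" unfolding f_def using i00 by simp
        also have "\<dots> = of_nat (m_count2 r k)" unfolding f_def using rec2[OF rk] by simp
        finally show ?thesis using e o False by simp
      qed
    qed
  qed
  have c0: "(1 - Bi) $ 0 * Bm $ 0 = 1" using fg fps_mult_nth_0[of "1 - Bi" Bm] by simp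
  have inv0: "inverse ((1 - Bi) $ 0) = Bm $ 0" using fps_inverse_unique[OF c0] .
  have c0': "Bm $ 0 * (1 - Bi) $ 0 = 1" using c0 by (simp add: mult.commute)
  have "fps_right_inverse (1 - Bi) (Bm $ 0) = Bm" using fps_lr_inverse_unique_ring1(2)[OF fg c0'] .
  moreover have "inverse (1 - Bi) = fps_right_inverse (1 - Bi) (inverse ((1 - Bi) $ 0))"
    by (rule fps_inverse_def)
  ultimately have "inverse (1 - Bi) = Bm" unfolding inv0 by simp
  then show ?thesis unfolding Bm_def Bi_def by simp
qed

theorem corollary6p19:
  shows "Abs_fps (\<lambda>n. of_nat (m_count n) :: rat) = inverse (1 - Abs_fps (\<lambda>n. of_nat (i_count n)))
       \<and> biv m_count2 = inverse (1 - biv i_count2)"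
  using uni_part biv_part by blast


end
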